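(* Let $S=\{x\in\mathbb{R}^n\mid h_i^Tx\le b_i,\ i=1,\dots,r\}$, $U_{0,A}=\{A\in\mathbb{R}^{n\times n}\mid\mathrm{Tr}(V_j^TA)\le v_j,\ j=1,\dots,s\}$, and $U_{0,g}=\{g:\mathbb{R}^n\to\mathbb{R}^n\mid\|g(x)\|_\infty\le\gamma\|x\|_p^d\ \ \forall x\in S\}$, where $p\ge1$ is either $+\infty$ or a rational number, $\gamma>0$, and $d$ is a nonnegative integer. Let $f_\star(x)=A_\star x+g_\star(x)$ with $A_\star\in U_{0,A}$ and $g_\star\in U_{0,g}$. Let $x_1,\dots,x_k\in\mathbb{R}^n$, $y_j=f_\star(x_j)$, and $U_{k,A}=\{A\in U_{0,A}\mid\|Ax_j-y_j\|_\infty\le\gamma\|x_j\|_p^d,\ j=1,\dots,k\}$. Let $c\in\mathbb{R}^n$. Then the problem $$\min_x\ c^Tx\quad\text{s.t. } x\in S,\quad f(x)\in S\ \ \text{for all } f\in\{x\mapsto Ax+g(x)\mid A\in U_{k,A},\ g\in U_{0,g}\}$$ can be reformulated as a second-order cone program.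
   Context: Setting: an unknown nonlinear system $x_{t+1}=f_\star(x_t)$ consisting of an unknown linear part and an unknown nonlinear part of bounded growth on $S$; $(x_j,y_j)$ are observed one-step transitions. *)

theory Defs
  imports "HOL-Analysis.Analysis"
begin

definition linf :: "real^'n \<Rightarrow> real" where
  "linf x = Max (range (\<lambda>i. \<bar>x$i\<bar>))"

definition pnorm :: "ereal \<Rightarrow> real^'n \<Rightarrow> real" where
  "pnorm p x = (if p = \<infinity> then linf x
     else (\<Sum>i\<in>UNIV. \<bar>x$i\<bar> powr real_of_ereal p) powr (1 / real_of_ereal p))"

definition polyS :: "nat \<Rightarrow> (nat \<Rightarrow> real^'n) \<Rightarrow> (nat \<Rightarrow> real) \<Rightarrow> (real^'n) set" where
  "polyS r h b = {x. \<forall>i<r. h i \<bullet> x \<le> b i}"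

definition U0A :: "nat \<Rightarrow> (nat \<Rightarrow> real^'n^'n) \<Rightarrow> (nat \<Rightarrow> real) \<Rightarrow> (real^'n^'n) set" where
  "U0A s V v = {A. \<forall>j<s. trace (transpose (V j) ** A) \<le> v j}"

definition U0g :: "(real^'n) set \<Rightarrow> real \<Rightarrow> ereal \<Rightarrow> nat \<Rightarrow> (real^'n \<Rightarrow> real^'n) set" where
  "U0g S \<gamma> p d = {g. \<forall>x\<in>S. linf (g x) \<le> \<gamma> * (pnorm p x) ^ d}"

definition UkA :: "(real^'n^'n) set \<Rightarrow> real \<Rightarrow> ereal \<Rightarrow> nat \<Rightarrow> nat \<Rightarrow> (nat \<Rightarrow> real^'n)
    \<Rightarrow> (nat \<Rightarrow> real^'n) \<Rightarrow> (real^'n^'n) set" where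
  "UkA U \<gamma> p d k xs ys = {A\<in>U. \<forall>j<k. linf (A *v xs j - ys j) \<le> \<gamma> * (pnorm p (xs j)) ^ d}"

definition robust_feasible :: "(real^'n) set \<Rightarrow> (real^'n^'n) set \<Rightarrow> (real^'n \<Rightarrow> real^'n) set
    \<Rightarrow> (real^'n) set" where
  "robust_feasible S UA UG = {x. x \<in> S \<and>
     (\<forall>A g. A \<in> UA \<longrightarrow> g \<in> UG \<longrightarrow> A *v x + g x \<in> S)}"

definition soc_constraint :: "nat \<Rightarrow> nat \<Rightarrow> (nat \<Rightarrow> real^'n) \<Rightarrow> (nat \<Rightarrow> nat \<Rightarrow> real) \<Rightarrow> (nat \<Rightarrow> real)
    \<Rightarrow> real^'n \<Rightarrow> (nat \<Rightarrow> real) \<Rightarrow> real \<Rightarrow> real^'n \<Rightarrow> (nat \<Rightarrow> real) \<Rightarrow> bool" where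
  "soc_constraint m q Mx Mz bb ex ez f x z \<longleftrightarrow>
     sqrt (\<Sum>i<q. (Mx i \<bullet> x + (\<Sum>j<m. Mz i j * z j) + bb i)\<^sup>2)
       \<le> ex \<bullet> x + (\<Sum>j<m. ez j * z j) + f"

text \<open>The problem  min c^T x  s.t. x in F  can be reformulated as a second-order cone program:
  there is an SOCP in variables (x, z) (finitely many SOC constraints; linear equalities and
  inequalities are the special case q = 0) with linear objective cx . x + cz . z such that
  F is exactly the projection of the SOCP feasible set onto x and the SOCP objective
  coincides with c^T x on its feasible set.\<close>
definition socp_reformulable :: "real^'n \<Rightarrow> (real^'n) set \<Rightarrow> bool" where
  "socp_reformulable c F \<longleftrightarrow>
    (\<exists>(m::nat) (L::nat) (q::nat \<Rightarrow> nat) Mx Mz bb ex ez f (cx::real^'n) (cz::nat \<Rightarrow> real).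
       (\<forall>x. x \<in> F \<longleftrightarrow> (\<exists>z. \<forall>l<L. soc_constraint m (q l) (Mx l) (Mz l) (bb l) (ex l) (ez l) (f l) x z))
     \<and> (\<forall>x z. (\<forall>l<L. soc_constraint m (q l) (Mx l) (Mz l) (bb l) (ex l) (ez l) (f l) x z)
              \<longrightarrow> cx \<bullet> x + (\<Sum>j<m. cz j * z j) = c \<bullet> x))"

end

theory Submission
  imports Defs
begin

definition merge :: "(nat \<Rightarrow> real) \<Rightarrow> (nat \<Rightarrow> real) \<Rightarrow> nat \<Rightarrow> real" where
  "merge w z = (\<lambda>k. if even k then w (k div 2) else z (k div 2))"

definition ev :: "(nat \<Rightarrow> real) \<Rightarrow> nat \<Rightarrow> real" where "ev V = (\<lambda>i. V (2*i))"
definition od :: "(nat \<Rightarrow> real) \<Rightarrow> nat \<Rightarrow> real" where "od V = (\<lambda>i. V (2*i+1))"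

lemma ev_merge[simp]: "ev (merge w z) = w" by (simp add: ev_def merge_def)
lemma od_merge[simp]: "od (merge w z) = z" by (simp add: od_def merge_def)
lemma merge_ev_od[simp]: "merge (ev V) (od V) = V"
  by (auto simp: merge_def ev_def od_def fun_eq_iff elim: oddE)
lemma merge_0[simp]: "merge w z 0 = w 0" by (simp add: merge_def)
lemma merge_1[simp]: "merge w z (Suc 0) = z 0" by (simp add: merge_def)

definition aff :: "(real^'n \<Rightarrow> (nat \<Rightarrow> real) \<Rightarrow> real) \<Rightarrow> bool" where
  "aff \<phi> \<longleftrightarrow> (\<exists>ex ez m f. \<forall>x z. \<phi> x z = ex \<bullet> x + (\<Sum>j<m. ez j * z j) + f)"

lemma aff_pad:
  assumes "aff \<phi>"
  shows "\<exists>m0. \<forall>M\<ge>m0. \<exists>ex ez f. \<forall>x z. \<phi> x z = ex \<bullet> x + (\<Sum>j<M. ez j * z j) + f"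
proof -
  obtain ex ez m f where e: "\<And>x z. \<phi> x z = ex \<bullet> x + (\<Sum>j<m. ez j * z j) + f"
    using assms unfolding aff_def by blast
  have "\<forall>M\<ge>m. \<exists>ex ez f. \<forall>x z. \<phi> x z = ex \<bullet> x + (\<Sum>j<M. ez j * z j) + f"
  proof (intro allI impI)
    fix M assume "m \<le> M"
    have "(\<Sum>j<M. (if j < m then ez j else 0) * z j) = (\<Sum>j<m. ez j * z j)" for z
    proof -
      show ?thesis
        by (rule sum.mono_neutral_cong_right) (use \<open>m \<le> M\<close> in auto)
    qed
    then show "\<exists>ex ez f. \<forall>x z. \<phi> x z = ex \<bullet> x + (\<Sum>j<M. ez j * z j) + f"
      using e by (intro exI[of _ ex] exI[of _ "\<lambda>j. if j < m then ez j else 0"] exI[of _ f]) simp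
  qed
  then show ?thesis by blast
qed

lemma aff_const: "aff (\<lambda>x z. c)"
  unfolding aff_def by (rule exI[of _ 0], rule exI[of _ "\<lambda>_. 0"], rule exI[of _ 0], rule exI[of _ c]) simp

lemma aff_var: "aff (\<lambda>x z. z j)"
proof -
  have "(\<Sum>i<Suc j. (if i = j then 1 else 0) * z i) = z j" for z :: "nat \<Rightarrow> real"
    by (simp add: if_distrib sum.delta)
  then show ?thesis unfolding aff_def
    by (intro exI[of _ 0] exI[of _ "\<lambda>i. if i = j then 1 else 0"] exI[of _ "Suc j"] exI[of _ 0]) simp
qed

lemma aff_inner: "aff (\<lambda>x z. v \<bullet> x)"
  unfolding aff_def by (intro exI[of _ v] exI[of _ "\<lambda>_. 0"] exI[of _ 0] exI[of _ 0]) simp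

lemma aff_comp: "aff (\<lambda>x z. x $ i)"
  using aff_inner[of "axis i 1"] by (simp add: inner_axis')

lemma aff_add: "aff f \<Longrightarrow> aff g \<Longrightarrow> aff (\<lambda>x z. f x z + g x z)"
proof -
  assume "aff f" "aff g"
  obtain m0 where m0: "\<forall>M\<ge>m0. \<exists>ex ez c. \<forall>x z. f x z = ex \<bullet> x + (\<Sum>j<M. ez j * z j) + c"
    using aff_pad[OF \<open>aff f\<close>] by blast
  obtain m1 where m1: "\<forall>M\<ge>m1. \<exists>ex ez c. \<forall>x z. g x z = ex \<bullet> x + (\<Sum>j<M. ez j * z j) + c"
    using aff_pad[OF \<open>aff g\<close>] by blast
  obtain e1 z1 c1 where 1: "\<forall>x z. f x z = e1 \<bullet> x + (\<Sum>j<max m0 m1. z1 j * z j) + c1"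
    using m0[rule_format, OF max.cobounded1] by blast
  obtain e2 z2 c2 where 2: "\<forall>x z. g x z = e2 \<bullet> x + (\<Sum>j<max m0 m1. z2 j * z j) + c2"
    using m1[rule_format, OF max.cobounded2] by blast
  show ?thesis unfolding aff_def
    apply (intro exI[of _ "e1+e2"] exI[of _ "\<lambda>j. z1 j + z2 j"] exI[of _ "max m0 m1"] exI[of _ "c1+c2"])
    using 1 2 by (simp add: inner_add_left distrib_right sum.distrib)
qed

lemma aff_mult: "aff f \<Longrightarrow> aff (\<lambda>x z. c * f x z)"
proof -
  assume "aff f"
  then obtain ex ez m d where e: "\<forall>x z. f x z = ex \<bullet> x + (\<Sum>j<m. ez j * z j) + d"
    unfolding aff_def by blast
  show ?thesis unfolding aff_def
    apply (intro exI[of _ "c *\<^sub>R ex"] exI[of _ "\<lambda>j. c * ez j"] exI[of _ m] exI[of _ "c*d"])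
    using e by (simp add: distrib_left sum_distrib_left mult.assoc)
qed

lemma aff_neg: "aff f \<Longrightarrow> aff (\<lambda>x z. - f x z)"
  using aff_mult[of f "-1"] by simp

lemma aff_diff: "aff f \<Longrightarrow> aff g \<Longrightarrow> aff (\<lambda>x z. f x z - g x z)"
  using aff_add[of f "\<lambda>x z. - g x z"] aff_neg[of g] by simp

lemma aff_sum: "finite I \<Longrightarrow> (\<And>i. i \<in> I \<Longrightarrow> aff (f i)) \<Longrightarrow> aff (\<lambda>x z. \<Sum>i\<in>I. f i x z)"
proof (induction I rule: finite_induct)
  case empty then show ?case by (simp add: aff_const)
next
  case (insert a F)
  then show ?case using aff_add[of "f a" "\<lambda>x z. \<Sum>i\<in>F. f i x z"] by simp
qed

lemma aff_subst:
  assumes "aff \<phi>" "\<And>j. aff (\<psi> j)"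
  shows "aff (\<lambda>x z. \<phi> x (\<lambda>j. \<psi> j x z))"
proof -
  obtain ex ez m f where e: "\<forall>x z. \<phi> x z = ex \<bullet> x + (\<Sum>j<m. ez j * z j) + f"
    using assms(1) unfolding aff_def by blast
  have "aff (\<lambda>x z. ex \<bullet> x + (\<Sum>j<m. ez j * \<psi> j x z) + f)"
    using assms(2) by (intro aff_add aff_sum aff_mult aff_inner aff_const) auto
  then show ?thesis using e by simp
qed

definition socp :: "(real^'n \<Rightarrow> (nat \<Rightarrow> real) \<Rightarrow> bool) \<Rightarrow> bool" where
  "socp C \<longleftrightarrow> (\<exists>(q::nat) A \<beta>. (\<forall>i<q. aff (A i)) \<and> aff \<beta> \<and>
      (\<forall>x z. C x z \<longleftrightarrow> sqrt (\<Sum>i<q. (A i x z)\<^sup>2) \<le> \<beta> x z))"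

lemma socp_subst:
  assumes "socp C" "\<And>j. aff (\<psi> j)"
  shows "socp (\<lambda>x z. C x (\<lambda>j. \<psi> j x z))"
proof -
  obtain q :: nat and A \<beta> where A: "\<forall>i<q. aff (A i)" "aff \<beta>"
    "\<forall>x z. C x z \<longleftrightarrow> sqrt (\<Sum>i<q. (A i x z)\<^sup>2) \<le> \<beta> x z"
    using assms(1) unfolding socp_def by blast
  have a1: "\<forall>i<q. aff (\<lambda>x z. A i x (\<lambda>j. \<psi> j x z))"
  proof (intro allI impI)
    fix i assume "i < q"
    show "aff (\<lambda>x z. A i x (\<lambda>j. \<psi> j x z))" by (rule aff_subst[OF A(1)[rule_format, OF \<open>i < q\<close>] assms(2)])
  qed
  have a2: "aff (\<lambda>x z. \<beta> x (\<lambda>j. \<psi> j x z))" by (rule aff_subst[OF A(2) assms(2)])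
  show ?thesis unfolding socp_def
    apply (rule exI[of _ q], rule exI[of _ "\<lambda>i x z. A i x (\<lambda>j. \<psi> j x z)"],
        rule exI[of _ "\<lambda>x z. \<beta> x (\<lambda>j. \<psi> j x z)"])
    using a1 a2 A(3) by simp
qed

definition rep :: "(real^'n \<Rightarrow> (nat \<Rightarrow> real) \<Rightarrow> bool) \<Rightarrow> bool" where
  "rep P \<longleftrightarrow> (\<exists>Cs. (\<forall>C\<in>set Cs. socp C) \<and>
      (\<forall>x w. P x w \<longleftrightarrow> (\<exists>z. \<forall>C\<in>set Cs. C x (merge w z))))"

lemma rep_true: "rep (\<lambda>x w. True)"
  unfolding rep_def by (rule exI[of _ "[]"]) simp

lemma rep_cong: "rep P \<Longrightarrow> (\<And>x w. P x w \<longleftrightarrow> Q x w) \<Longrightarrow> rep Q"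
proof -
  assume "rep P" "\<And>x w. P x w \<longleftrightarrow> Q x w"
  then have "P = Q" by (auto simp: fun_eq_iff)
  then show ?thesis using \<open>rep P\<close> by simp
qed

lemma aff_ev: "aff (\<lambda>x V. ev V i)"
  unfolding ev_def by (rule aff_var)
lemma aff_od: "aff (\<lambda>x V. od V i)"
  unfolding od_def by (rule aff_var)
lemma aff_ev_od: "aff (\<lambda>x V. ev (od V) i)"
  unfolding od_def ev_def by (rule aff_var)
lemma aff_od_od: "aff (\<lambda>x V. od (od V) i)"
  unfolding od_def by (rule aff_var)

lemma aff_merge_sub:
  assumes "\<And>k. aff (\<alpha> k)" "\<And>k. aff (\<beta> k)"
  shows "aff (\<lambda>x V. merge (\<lambda>k. \<alpha> k x V) (\<lambda>k. \<beta> k x V) j)"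
  using assms by (cases "even j") (simp_all add: merge_def)

lemma socp_merge:
  assumes "socp C" "\<And>k. aff (\<alpha> k)" "\<And>k. aff (\<beta> k)"
  shows "socp (\<lambda>x V. C x (merge (\<lambda>k. \<alpha> k x V) (\<lambda>k. \<beta> k x V)))"
proof -
  have "socp (\<lambda>x V. C x (\<lambda>j. merge (\<lambda>k. \<alpha> k x V) (\<lambda>k. \<beta> k x V) j))"
    by (rule socp_subst[OF assms(1)]) (rule aff_merge_sub[OF assms(2,3)])
  then show ?thesis by (simp add: eta_contract_eq)
qed

lemma ball_single: "(\<forall>D\<in>set [E]. D x V) \<longleftrightarrow> E x V" by simp

lemma rep_basic:
  assumes "socp C" shows "rep C"
proof -
  have "socp (\<lambda>x V. C x (\<lambda>j. ev V j))"
    by (rule socp_subst[OF assms]) (rule aff_ev)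
  then have s: "socp (\<lambda>x V. C x (ev V))" by (simp add: eta_contract_eq)
  show ?thesis unfolding rep_def
  proof (rule exI[of _ "[\<lambda>x V. C x (ev V)]"], intro conjI allI)
    show "\<forall>D\<in>set [\<lambda>x V. C x (ev V)]. socp D" using s by simp
    fix x w
    have "(\<exists>z. \<forall>D\<in>set [\<lambda>x V. C x (ev V)]. D x (merge w z)) \<longleftrightarrow> (\<exists>z::nat\<Rightarrow>real. C x (ev (merge w z)))"
      by (simp only: ball_single)
    then show "C x w = (\<exists>z. \<forall>D\<in>set [\<lambda>x V. C x (ev V)]. D x (merge w z))" by simp
  qed
qed

lemma ball_map: "(\<forall>C\<in>set (map f Cs). C x V) \<longleftrightarrow> (\<forall>C\<in>set Cs. f C x V)" by simp
lemma ball_app: "(\<forall>C\<in>set (A @ B). C x V) \<longleftrightarrow> (\<forall>C\<in>set A. C x V) \<and> (\<forall>C\<in>set B. C x V)" by auto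

lemma rep_and:
  assumes "rep P" "rep Q" shows "rep (\<lambda>x w. P x w \<and> Q x w)"
proof -
  obtain Cs where C: "\<forall>C\<in>set Cs. socp C" "\<forall>x w. P x w \<longleftrightarrow> (\<exists>z. \<forall>C\<in>set Cs. C x (merge w z))"
    using assms(1) unfolding rep_def by blast
  obtain Ds where D: "\<forall>C\<in>set Ds. socp C" "\<forall>x w. Q x w \<longleftrightarrow> (\<exists>z. \<forall>C\<in>set Ds. C x (merge w z))"
    using assms(2) unfolding rep_def by blast
  define tr1 where "tr1 = (\<lambda>(C::real^'a \<Rightarrow> (nat \<Rightarrow> real) \<Rightarrow> bool) x V.
      C x (merge (ev V) (ev (od V))))"
  define tr2 where "tr2 = (\<lambda>(C::real^'a \<Rightarrow> (nat \<Rightarrow> real) \<Rightarrow> bool) x V.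
      C x (merge (ev V) (od (od V))))"
  have s1: "socp (tr1 C)" if "socp C" for C
    unfolding tr1_def by (rule socp_merge[OF that aff_ev aff_ev_od])
  have s2: "socp (tr2 C)" if "socp C" for C
    unfolding tr2_def by (rule socp_merge[OF that aff_ev aff_od_od])
  have t1: "tr1 C x (merge w (merge z1 z2)) = C x (merge w z1)" for C x w z1 z2
    unfolding tr1_def by simp
  have t2: "tr2 C x (merge w (merge z1 z2)) = C x (merge w z2)" for C x w z1 z2
    unfolding tr2_def by simp
  show ?thesis unfolding rep_def
  proof (intro exI[of _ "map tr1 Cs @ map tr2 Ds"] conjI allI)
    show "\<forall>C\<in>set (map tr1 Cs @ map tr2 Ds). socp C" using C D s1 s2 by auto
    fix x w
    show "(P x w \<and> Q x w) = (\<exists>z. \<forall>C\<in>set (map tr1 Cs @ map tr2 Ds). C x (merge w z))"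
    proof
      assume "P x w \<and> Q x w"
      then obtain z1 z2 where "\<forall>C\<in>set Cs. C x (merge w z1)" "\<forall>C\<in>set Ds. C x (merge w z2)"
        using C D by blast
      then have "\<forall>C\<in>set (map tr1 Cs @ map tr2 Ds). C x (merge w (merge z1 z2))"
        by (simp only: ball_app ball_map t1 t2)
      then show "\<exists>z. \<forall>C\<in>set (map tr1 Cs @ map tr2 Ds). C x (merge w z)" by blast
    next
      assume "\<exists>z. \<forall>C\<in>set (map tr1 Cs @ map tr2 Ds). C x (merge w z)"
      then obtain z where z: "\<forall>C\<in>set (map tr1 Cs @ map tr2 Ds). C x (merge w z)" by blast
      then have z': "\<forall>C\<in>set (map tr1 Cs @ map tr2 Ds). C x (merge w (merge (ev z) (od z)))" by (simp only: merge_ev_od)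
      have "\<forall>C\<in>set Cs. C x (merge w (ev z))"
      proof
        fix C assume "C \<in> set Cs"
        then have mem: "tr1 C \<in> set (map tr1 Cs @ map tr2 Ds)" by simp
        have "tr1 C x (merge w (merge (ev z) (od z)))" by (rule bspec[OF z' mem])
        then show "C x (merge w (ev z))" unfolding t1 .
      qed
      moreover have "\<forall>C\<in>set Ds. C x (merge w (od z))"
      proof
        fix C assume "C \<in> set Ds"
        then have mem: "tr2 C \<in> set (map tr1 Cs @ map tr2 Ds)" by simp
        have "tr2 C x (merge w (merge (ev z) (od z)))" by (rule bspec[OF z' mem])
        then show "C x (merge w (od z))" unfolding t2 .
      qed
      ultimately show "P x w \<and> Q x w" using C(2)[rule_format, of x w] D(2)[rule_format, of x w] by blast
    qed
  qed
qed

lemma rep_ball: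
  assumes "finite I" "\<And>i. i \<in> I \<Longrightarrow> rep (P i)"
  shows "rep (\<lambda>x w. \<forall>i\<in>I. P i x w)"
  using assms
proof (induction I rule: finite_induct)
  case empty then show ?case by (simp add: rep_true)
next
  case (insert a F)
  then show ?case using rep_and[of "P a" "\<lambda>x w. \<forall>i\<in>F. P i x w"] by simp
qed

lemma rep_subst:
  assumes "rep Q" "\<And>k. aff (\<psi> k)"
  shows "rep (\<lambda>x w. Q x (\<lambda>k. \<psi> k x w))"
proof -
  obtain Cs where C: "\<forall>C\<in>set Cs. socp C" "\<forall>x w. Q x w \<longleftrightarrow> (\<exists>z. \<forall>C\<in>set Cs. C x (merge w z))"
    using assms(1) unfolding rep_def by blast
  define tr where "tr = (\<lambda>(C::real^'a \<Rightarrow> (nat \<Rightarrow> real) \<Rightarrow> bool) x V.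
      C x (merge (\<lambda>k. \<psi> k x (ev V)) (od V)))"
  have s: "socp (tr C)" if "socp C" for C
  proof -
    have a1: "aff (\<lambda>x V. \<psi> k x (\<lambda>i. ev V i))" for k
      by (rule aff_subst[OF assms(2)[of k]]) (rule aff_ev)
    have "socp (\<lambda>x V. C x (merge (\<lambda>k. \<psi> k x (\<lambda>i. ev V i)) (\<lambda>k. od V k)))"
      by (rule socp_merge[OF that a1 aff_od])
    then show ?thesis unfolding tr_def by (simp add: eta_contract_eq)
  qed
  have t: "tr C x (merge w z) = C x (merge (\<lambda>k. \<psi> k x w) z)" for C x w z
    unfolding tr_def by simp
  show ?thesis unfolding rep_def
  proof (intro exI[of _ "map tr Cs"] conjI allI)
    show "\<forall>C\<in>set (map tr Cs). socp C" using C s by auto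
    fix x w
    have "(\<exists>z. \<forall>C\<in>set (map tr Cs). C x (merge w z)) \<longleftrightarrow> (\<exists>z. \<forall>C\<in>set Cs. C x (merge (\<lambda>k. \<psi> k x w) z))"
      by (simp only: ball_map t)
    then show "Q x (\<lambda>k. \<psi> k x w) = (\<exists>z. \<forall>C\<in>set (map tr Cs). C x (merge w z))"
      using C(2) by simp
  qed
qed

lemma rep_ex:
  assumes "rep Q"
  shows "rep (\<lambda>x w. \<exists>u. Q x (merge w u))"
proof -
  obtain Cs where C: "\<forall>C\<in>set Cs. socp C" "\<forall>x w. Q x w \<longleftrightarrow> (\<exists>z. \<forall>C\<in>set Cs. C x (merge w z))"
    using assms(1) unfolding rep_def by blast
  define tr where "tr = (\<lambda>(C::real^'a \<Rightarrow> (nat \<Rightarrow> real) \<Rightarrow> bool) x V.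
      C x (merge (merge (ev V) (ev (od V))) (od (od V))))"
  have s: "socp (tr C)" if "socp C" for C
  proof -
    have a1: "aff (\<lambda>x V. merge (\<lambda>i. ev V i) (\<lambda>i. ev (od V) i) k)" for k
      by (rule aff_merge_sub) (rule aff_ev, rule aff_ev_od)
    have "socp (\<lambda>x V. C x (merge (\<lambda>k. merge (\<lambda>i. ev V i) (\<lambda>i. ev (od V) i) k) (\<lambda>k. od (od V) k)))"
      by (rule socp_merge[OF that a1 aff_od_od])
    then show ?thesis unfolding tr_def by (simp add: eta_contract_eq)
  qed
  have t: "tr C x (merge w (merge u z)) = C x (merge (merge w u) z)" for C x w u z
    unfolding tr_def by simp
  show ?thesis unfolding rep_def
  proof (intro exI[of _ "map tr Cs"] conjI allI)
    show "\<forall>C\<in>set (map tr Cs). socp C" using C s by auto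
    fix x w
    show "(\<exists>u. Q x (merge w u)) = (\<exists>z. \<forall>C\<in>set (map tr Cs). C x (merge w z))"
    proof
      assume "\<exists>u. Q x (merge w u)"
      then obtain u z where "\<forall>C\<in>set Cs. C x (merge (merge w u) z)" using C by blast
      then have "\<forall>C\<in>set (map tr Cs). C x (merge w (merge u z))" by (simp only: ball_map t)
      then show "\<exists>z. \<forall>C\<in>set (map tr Cs). C x (merge w z)" by blast
    next
      assume "\<exists>z. \<forall>C\<in>set (map tr Cs). C x (merge w z)"
      then obtain z where "\<forall>C\<in>set (map tr Cs). C x (merge w z)" by blast
      then have "\<forall>C\<in>set (map tr Cs). C x (merge w (merge (ev z) (od z)))" by (simp only: merge_ev_od)
      then have "\<forall>C\<in>set Cs. C x (merge (merge w (ev z)) (od z))" by (simp only: ball_map t)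
      then show "\<exists>u. Q x (merge w u)" using C(2)[rule_format, of x "merge w (ev z)"] by blast
    qed
  qed
qed

lemma rep_lin:
  assumes "aff \<phi>" shows "rep (\<lambda>x w. 0 \<le> \<phi> x w)"
proof -
  have "socp (\<lambda>x w. 0 \<le> \<phi> x w)" unfolding socp_def
    using assms by (intro exI[of _ 0] exI[of _ "\<lambda>i x z. 0"] exI[of _ \<phi>]) simp
  then show ?thesis by (rule rep_basic)
qed

lemma rep_le:
  assumes "aff \<phi>" "aff \<psi>" shows "rep (\<lambda>x w. \<phi> x w \<le> \<psi> x w)"
  using rep_lin[OF aff_diff[OF assms(2,1)]] by simp

lemma rep_eq:
  assumes "aff \<phi>" "aff \<psi>" shows "rep (\<lambda>x w. \<phi> x w = \<psi> x w)"
  using rep_and[OF rep_le[OF assms] rep_le[OF assms(2,1)]] by (simp add: order_eq_iff)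

lemma rep_hyp:
  assumes "aff a" "aff b" "aff y"
  shows "rep (\<lambda>x w. 0 \<le> a x w \<and> 0 \<le> b x w \<and> (y x w)\<^sup>2 \<le> a x w * b x w)"
proof -
  have "socp (\<lambda>x w. sqrt ((2 * y x w)\<^sup>2 + (a x w - b x w)\<^sup>2) \<le> a x w + b x w)"
    unfolding socp_def
    apply (intro exI[of _ 2] exI[of _ "\<lambda>i x w. if i = 0 then 2 * y x w else a x w - b x w"]
        exI[of _ "\<lambda>x w. a x w + b x w"])
    using assms by (auto simp: numeral_2_eq_2 less_Suc_eq intro!: aff_mult aff_diff aff_add)
  then have r: "rep (\<lambda>x w. sqrt ((2 * y x w)\<^sup>2 + (a x w - b x w)\<^sup>2) \<le> a x w + b x w \<and> 0 \<le> a x w \<and> 0 \<le> b x w)"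
    by (intro rep_and rep_basic rep_lin assms)
  have e: "(sqrt ((2 * Y)\<^sup>2 + (A - B)\<^sup>2) \<le> A + B \<and> 0 \<le> A \<and> 0 \<le> B) \<longleftrightarrow>
       (0 \<le> A \<and> 0 \<le> B \<and> Y\<^sup>2 \<le> A * B)" for A B Y :: real
  proof -
    have "0 \<le> A \<Longrightarrow> 0 \<le> B \<Longrightarrow> sqrt ((2 * Y)\<^sup>2 + (A - B)\<^sup>2) \<le> A + B \<longleftrightarrow> (2 * Y)\<^sup>2 + (A - B)\<^sup>2 \<le> (A + B)\<^sup>2"
      using real_sqrt_le_iff[of "(2 * Y)\<^sup>2 + (A - B)\<^sup>2" "(A + B)\<^sup>2"] real_sqrt_abs[of "A + B"] by simp
    moreover have "(2 * Y)\<^sup>2 + (A - B)\<^sup>2 \<le> (A + B)\<^sup>2 \<longleftrightarrow> Y\<^sup>2 \<le> A * B"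
      by (simp add: power2_eq_square algebra_simps)
    ultimately show ?thesis by blast
  qed
  show ?thesis by (rule rep_cong[OF r], rule e)
qed


lemma aff_ev_subst: "aff \<phi> \<Longrightarrow> aff (\<lambda>x W. \<phi> x (ev W))"
proof -
  assume a: "aff \<phi>"
  have "aff (\<lambda>x W. \<phi> x (\<lambda>j. ev W j))" by (rule aff_subst[OF a aff_ev])
  then show ?thesis by simp
qed

definition GM :: "nat \<Rightarrow> (nat \<Rightarrow> real) \<Rightarrow> real \<Rightarrow> bool" where
  "GM K ws y \<longleftrightarrow> 0 \<le> y \<and> (\<forall>j<2^K. 0 \<le> ws j) \<and> y^(2^K) \<le> (\<Prod>j<2^K. ws j)"

lemma GM_0: "GM 0 ws y \<longleftrightarrow> 0 \<le> y \<and> 0 \<le> ws 0 \<and> y \<le> ws 0"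
  by (auto simp: GM_def)

lemma prod_split_add: "(\<Prod>j<m+n. f j) = (\<Prod>j<m. f j) * (\<Prod>j<n. f (j+m)::real)" for f :: "nat \<Rightarrow> real" and m n :: nat
  by (induction n) (auto simp: algebra_simps)

lemma all_split_add: "(\<forall>j<m+n. P j) \<longleftrightarrow> (\<forall>j<m. P j) \<and> (\<forall>j<n. P (j+m))" for m n :: nat
proof (intro iffI conjI allI impI)
  fix j assume A: "\<forall>j<m+n. P j"
  { assume "j < m" then show "P j" using A by simp }
  { assume "j < n" then show "P (j+m)" using A by simp }
next
  fix j assume A: "(\<forall>j<m. P j) \<and> (\<forall>j<n. P (j+m))" and j: "j < m+n"
  show "P j"
  proof (cases "j < m")
    case True then show ?thesis using A by simp
  next
    case False
    then have "j = (j - m) + m" "j - m < n" using j by auto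
    then show ?thesis using A by metis
  qed
qed

lemma GM_Suc: "GM (Suc K) ws y \<longleftrightarrow>
   (\<exists>a b. GM K ws a \<and> GM K (\<lambda>j. ws (j + 2^K)) b \<and> 0 \<le> a \<and> 0 \<le> b \<and> 0 \<le> y \<and> y\<^sup>2 \<le> a * b)"
proof -
  let ?N = "2^K :: nat"
  have N2: "2^Suc K = ?N + ?N" by simp
  have pr: "(\<Prod>j<2^Suc K. ws j) = (\<Prod>j<?N. ws j) * (\<Prod>j<?N. ws (j + ?N))"
    unfolding N2 by (rule prod_split_add)
  have nn: "(\<forall>j<2^Suc K. 0 \<le> ws j) \<longleftrightarrow> (\<forall>j<?N. 0 \<le> ws j) \<and> (\<forall>j<?N. 0 \<le> ws (j + ?N))"
    unfolding N2 by (rule all_split_add)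
  have ypow: "y^(2^Suc K) = (y\<^sup>2)^?N" by (simp add: power_mult[symmetric] mult.commute)
  show ?thesis
  proof
    assume g: "GM (Suc K) ws y"
    define P1 where "P1 = (\<Prod>j<?N. ws j)"
    define P2 where "P2 = (\<Prod>j<?N. ws (j + ?N))"
    have p1: "0 \<le> P1" unfolding P1_def using g nn by (auto simp: GM_def intro: prod_nonneg)
    have p2: "0 \<le> P2" unfolding P2_def using g nn by (auto simp: GM_def intro: prod_nonneg)
    define a where "a = root ?N P1"
    define b where "b = root ?N P2"
    have a0: "0 \<le> a" "a^?N = P1" unfolding a_def using p1 by (auto simp: real_root_pow_pos2)
    have b0: "0 \<le> b" "b^?N = P2" unfolding b_def using p2 by (auto simp: real_root_pow_pos2)
    have "(y\<^sup>2)^?N \<le> (a*b)^?N"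
      using g pr ypow a0 b0 by (simp add: GM_def P1_def P2_def power_mult_distrib)
    then have "y\<^sup>2 \<le> a*b"
      using power_mono_iff[of "y\<^sup>2" "a*b" ?N] a0 b0 by simp
    then show "\<exists>a b. GM K ws a \<and> GM K (\<lambda>j. ws (j + 2^K)) b \<and> 0 \<le> a \<and> 0 \<le> b \<and> 0 \<le> y \<and> y\<^sup>2 \<le> a * b"
      using g nn a0 b0 by (intro exI[of _ a] exI[of _ b]) (auto simp: GM_def P1_def P2_def)
  next
    assume "\<exists>a b. GM K ws a \<and> GM K (\<lambda>j. ws (j + 2^K)) b \<and> 0 \<le> a \<and> 0 \<le> b \<and> 0 \<le> y \<and> y\<^sup>2 \<le> a * b"
    then obtain a b where h: "GM K ws a" "GM K (\<lambda>j. ws (j + 2^K)) b" "0 \<le> a" "0 \<le> b" "0 \<le> y" "y\<^sup>2 \<le> a * b"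
      by blast
    have "(y\<^sup>2)^?N \<le> (a*b)^?N" by (rule power_mono) (use h in auto)
    also have "\<dots> = a^?N * b^?N" by (simp add: power_mult_distrib)
    also have "\<dots> \<le> (\<Prod>j<?N. ws j) * (\<Prod>j<?N. ws (j + ?N))"
      using h by (intro mult_mono) (auto simp: GM_def intro: prod_nonneg)
    finally show "GM (Suc K) ws y"
      using h nn pr ypow by (auto simp: GM_def)
  qed
qed

lemma rep_GM:
  assumes "\<And>j. aff (ws j)" "aff y"
  shows "rep (\<lambda>x w. GM K (\<lambda>j. ws j x w) (y x w))"
  using assms
proof (induction K arbitrary: ws y)
  case 0
  have "rep (\<lambda>x w. 0 \<le> y x w \<and> 0 \<le> ws 0 x w \<and> y x w \<le> ws 0 x w)"
    by (intro rep_and rep_lin rep_le 0)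
  then show ?case by (rule rep_cong) (simp add: GM_0)
next
  case (Suc K)
  define Q where "Q = (\<lambda>x W. GM K (\<lambda>j. ws j x (ev W)) (od W 0) \<and>
       GM K (\<lambda>j. ws (j + 2^K) x (ev W)) (od W 1) \<and>
       (0 \<le> od W 0 \<and> 0 \<le> od W 1 \<and> (y x (ev W))\<^sup>2 \<le> od W 0 * od W 1) \<and> 0 \<le> y x (ev W))"
  have ay: "aff (\<lambda>x W. y x (ev W))" by (rule aff_ev_subst[OF Suc.prems(2)])
  have aw: "aff (\<lambda>x W. ws j x (ev W))" for j by (rule aff_ev_subst[OF Suc.prems(1)])
  have r1: "rep (\<lambda>x W. GM K (\<lambda>j. ws j x (ev W)) (od W 0))"
    using Suc.IH[of "\<lambda>j x W. ws j x (ev W)" "\<lambda>x W. od W 0"] aw aff_od by blast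
  have r2: "rep (\<lambda>x W. GM K (\<lambda>j. ws (j + 2^K) x (ev W)) (od W 1))"
    using Suc.IH[of "\<lambda>j x W. ws (j + 2^K) x (ev W)" "\<lambda>x W. od W 1"] aw aff_od by blast
  have r3: "rep (\<lambda>x W. 0 \<le> od W 0 \<and> 0 \<le> od W 1 \<and> (y x (ev W))\<^sup>2 \<le> od W 0 * od W 1)"
    by (rule rep_hyp[OF aff_od aff_od ay])
  have r4: "rep (\<lambda>x W. 0 \<le> y x (ev W))" by (rule rep_lin[OF ay])
  have "rep Q" unfolding Q_def by (rule rep_and[OF r1 rep_and[OF r2 rep_and[OF r3 r4]]])
  then have "rep (\<lambda>x w. \<exists>u. Q x (merge w u))" by (rule rep_ex)
  then show ?case
  proof (rule rep_cong)
    fix x w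
    show "(\<exists>u. Q x (merge w u)) = GM (Suc K) (\<lambda>j. ws j x w) (y x w)"
      unfolding GM_Suc Q_def
    proof
      assume "\<exists>u. GM K (\<lambda>j. ws j x (ev (merge w u))) (od (merge w u) 0) \<and>
        GM K (\<lambda>j. ws (j + 2 ^ K) x (ev (merge w u))) (od (merge w u) 1) \<and>
        (0 \<le> od (merge w u) 0 \<and> 0 \<le> od (merge w u) 1 \<and> (y x (ev (merge w u)))\<^sup>2 \<le> od (merge w u) 0 * od (merge w u) 1) \<and>
        0 \<le> y x (ev (merge w u))"
      then show "\<exists>a b. GM K (\<lambda>j. ws j x w) a \<and> GM K (\<lambda>j. ws (j + 2 ^ K) x w) b \<and> 0 \<le> a \<and> 0 \<le> b \<and> 0 \<le> y x w \<and> (y x w)\<^sup>2 \<le> a * b"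
        by auto
    next
      assume "\<exists>a b. GM K (\<lambda>j. ws j x w) a \<and> GM K (\<lambda>j. ws (j + 2 ^ K) x w) b \<and> 0 \<le> a \<and> 0 \<le> b \<and> 0 \<le> y x w \<and> (y x w)\<^sup>2 \<le> a * b"
      then obtain a b where h: "GM K (\<lambda>j. ws j x w) a" "GM K (\<lambda>j. ws (j + 2 ^ K) x w) b" "0 \<le> a" "0 \<le> b" "0 \<le> y x w" "(y x w)\<^sup>2 \<le> a * b"
        by blast
      show "\<exists>u. GM K (\<lambda>j. ws j x (ev (merge w u))) (od (merge w u) 0) \<and>
        GM K (\<lambda>j. ws (j + 2 ^ K) x (ev (merge w u))) (od (merge w u) 1) \<and>
        (0 \<le> od (merge w u) 0 \<and> 0 \<le> od (merge w u) 1 \<and> (y x (ev (merge w u)))\<^sup>2 \<le> od (merge w u) 0 * od (merge w u) 1) \<and>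
        0 \<le> y x (ev (merge w u))"
        using h by (intro exI[of _ "\<lambda>i. if i = 0 then a else b"]) simp
    qed
  qed
qed

lemma prod3:
  assumes "b \<le> a" "a \<le> N"
  shows "(\<Prod>j<N. if j < b then \<alpha> else if j < a then \<beta> else (\<gamma>::real)) = \<alpha>^b * \<beta>^(a-b) * \<gamma>^(N-a)"
proof -
  let ?f = "\<lambda>j. if j < b then \<alpha> else if j < a then \<beta> else \<gamma>"
  have e1: "(\<Prod>j<N. ?f j) = (\<Prod>j\<in>{0..<b}. ?f j) * (\<Prod>j\<in>{b..<N}. ?f j)"
    using prod.atLeastLessThan_concat[of 0 b N ?f] assms by (simp add: atLeast0LessThan)
  have e2: "(\<Prod>j\<in>{b..<N}. ?f j) = (\<Prod>j\<in>{b..<a}. ?f j) * (\<Prod>j\<in>{a..<N}. ?f j)"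
    using prod.atLeastLessThan_concat[of b a N ?f] assms by simp
  have "(\<Prod>j\<in>{0..<b}. ?f j) = (\<Prod>j\<in>{0..<b}. \<alpha>)" by (rule prod.cong) auto
  then have p1: "(\<Prod>j\<in>{0..<b}. ?f j) = \<alpha>^b" by simp
  have "(\<Prod>j\<in>{b..<a}. ?f j) = (\<Prod>j\<in>{b..<a}. \<beta>)" by (rule prod.cong) auto
  then have p2: "(\<Prod>j\<in>{b..<a}. ?f j) = \<beta>^(a-b)" by simp
  have "(\<Prod>j\<in>{a..<N}. ?f j) = (\<Prod>j\<in>{a..<N}. \<gamma>)" by (rule prod.cong) (use assms in auto)
  then have p3: "(\<Prod>j\<in>{a..<N}. ?f j) = \<gamma>^(N-a)" by simp
  show ?thesis using e1 e2 p1 p2 p3 by (simp add: mult.assoc)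
qed

lemma pow_pad:
  fixes t R :: real
  assumes "0 \<le> t" "0 \<le> R" "1 \<le> a" "a \<le> N"
  shows "t^N \<le> R * t^(N-a) \<longleftrightarrow> t^a \<le> R"
proof (cases "t = 0")
  case True then show ?thesis using assms by (simp add: zero_power)
next
  case False
  then have tp: "0 < t^(N-a)" using assms by simp
  have "t^N = t^a * t^(N-a)" using assms by (simp add: power_add[symmetric])
  then show ?thesis using tp by (simp add: mult_le_cancel_right_pos)
qed

lemma GM3:
  assumes "b \<le> a" "a \<le> 2^K" "0 \<le> \<alpha>" "0 \<le> \<beta>" "0 \<le> \<gamma>"
  shows "GM K (\<lambda>j. if j < b then \<alpha> else if j < a then \<beta> else \<gamma>) y \<longleftrightarrow>
         0 \<le> y \<and> y^(2^K) \<le> \<alpha>^b * \<beta>^(a-b) * \<gamma>^(2^K-a)"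
  using assms by (simp add: GM_def prod3)

lemma rep_GM3:
  assumes "aff \<alpha>" "aff \<beta>" "aff \<gamma>" "aff y"
  shows "rep (\<lambda>x w. GM K (\<lambda>j. if j < b then \<alpha> x w else if j < a then \<beta> x w else \<gamma> x w) (y x w))"
proof -
  have "aff (if j < b then \<alpha> else if j < a then \<beta> else \<gamma>)" for j using assms by auto
  then have "rep (\<lambda>x w. GM K (\<lambda>j. (if j < b then \<alpha> else if j < a then \<beta> else \<gamma>) x w) (y x w))"
    by (rule rep_GM[OF _ assms(4)])
  then show ?thesis
  proof (rule rep_cong)
    fix x w
    have "(\<lambda>j. (if j < b then \<alpha> else if j < a then \<beta> else \<gamma>) x w) = (\<lambda>j. if j < b then \<alpha> x w else if j < a then \<beta> x w else \<gamma> x w)"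
      by (rule ext) simp
    then show "GM K (\<lambda>j. (if j < b then \<alpha> else if j < a then \<beta> else \<gamma>) x w) (y x w) =
      GM K (\<lambda>j. if j < b then \<alpha> x w else if j < a then \<beta> x w else \<gamma> x w) (y x w)" by simp
  qed
qed


lemma linf_le_iff: "linf x \<le> u \<longleftrightarrow> (\<forall>i. \<bar>x$i\<bar> \<le> u)"
  unfolding linf_def by (subst Max_le_iff) auto

lemma abs_le_linf: "\<bar>x$i\<bar> \<le> linf x"
  unfolding linf_def by (rule Max_ge) auto

lemma linf_nonneg: "0 \<le> linf x"
  using abs_le_linf[of x undefined] by linarith

lemma pnorm_nonneg: "0 \<le> pnorm p x"
  unfolding pnorm_def using linf_nonneg by auto

lemma powr_pow_ab:
  fixes z :: real
  assumes "0 \<le> z" "1 \<le> b" "b \<le> a" "P = real a / real b"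
  shows "(z powr P)^b = z^a"
proof (cases "z = 0")
  case True
  have "0 < a" "0 < b" using assms by auto
  then show ?thesis using True by (simp add: zero_power)
next
  case False
  then have "(z powr P)^b = z powr (real b * P)" by (simp add: powr_power)
  also have "real b * P = real a" using assms by simp
  also have "z powr real a = z^a" using False assms by (simp add: powr_realpow)
  finally show ?thesis .
qed

lemma powr_pow_ab2:
  fixes U :: real
  assumes "0 < U" "1 \<le> b" "b \<le> a" "P = real a / real b"
  shows "(U powr (P - 1))^b = U^(a-b)"
proof -
  have "(U powr (P-1))^b = U powr (real b * (P-1))" using assms by (simp add: powr_power)
  also have "real b * (P-1) = real (a - b)" using assms by (simp add: of_nat_diff algebra_simps)
  also have "U powr real (a-b) = U^(a-b)" by (rule powr_realpow[OF assms(1)])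
  finally show ?thesis .
qed

lemma pn_rat_iff:
  fixes x :: "real^'n"
  assumes ab: "1 \<le> b" "b \<le> a" and P: "P = real a / real b"
  shows "(\<Sum>i\<in>UNIV. \<bar>x$i\<bar> powr P) powr (1/P) \<le> U \<longleftrightarrow>
    0 \<le> U \<and> (\<exists>t r. (\<forall>i. \<bar>x$i\<bar> \<le> t i \<and> 0 \<le> t i \<and> 0 \<le> r i \<and> t i^a \<le> r i^b * U^(a-b)) \<and> sum r UNIV \<le> U)"
    (is "?L \<longleftrightarrow> ?R")
proof -
  define S where "S = (\<Sum>i\<in>UNIV. \<bar>x$i\<bar> powr P)"
  have Ppos: "0 < P" using ab P by simp
  have S0: "0 \<le> S" unfolding S_def by (intro sum_nonneg) simp
  have SS: "(S powr (1/P)) powr P = S" using S0 Ppos by (simp add: powr_powr)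
  show ?thesis
  proof
    assume L: ?L
    then have LS: "S powr (1/P) \<le> U" unfolding S_def .
    have U0: "0 \<le> U" using LS by (meson order_trans powr_ge_zero)
    have SU: "S \<le> U powr P"
      using powr_mono2[of P "S powr (1/P)" U] LS Ppos SS by simp
    show ?R
    proof (cases "U = 0")
      case True
      then have "S \<le> 0" using SU by simp
      then have "S = 0" using S0 by simp
      then have "\<forall>i\<in>UNIV. \<bar>x$i\<bar> powr P = 0" unfolding S_def
        by (subst (asm) sum_nonneg_eq_0_iff) auto
      then have x0: "\<And>i. x$i = 0" by simp
      show ?R using True x0 ab
        by (intro conjI exI[of _ "\<lambda>_. 0"]) (auto simp: zero_power)
    next
      case False
      then have Up: "0 < U" using U0 by simp
      define r where "r = (\<lambda>i. \<bar>x$i\<bar> powr P / U powr (P - 1))"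
      have "sum r UNIV = S / U powr (P - 1)" unfolding r_def S_def by (simp add: sum_divide_distrib)
      also have "\<dots> \<le> U powr P / U powr (P - 1)"
        using SU Up by (simp add: divide_right_mono)
      also have "\<dots> = U" using Up by (simp add: powr_diff[symmetric])
      finally have sr: "sum r UNIV \<le> U" .
      have "\<bar>x$i\<bar>^a \<le> r i^b * U^(a-b)" for i
      proof -
        have "\<bar>x$i\<bar>^a = (\<bar>x$i\<bar> powr P)^b" using powr_pow_ab[of "\<bar>x$i\<bar>" b a P] ab P by simp
        also have "\<bar>x$i\<bar> powr P = r i * U powr (P - 1)" unfolding r_def using Up by simp
        also have "(r i * U powr (P - 1))^b = r i^b * U^(a-b)"
          using powr_pow_ab2[OF Up ab P] by (simp add: power_mult_distrib)
        finally show ?thesis by simp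
      qed
      then show ?R using U0 sr unfolding r_def
        by (intro conjI exI[of _ "\<lambda>i. \<bar>x$i\<bar>"] exI[of _ r]) (auto simp: r_def)
    qed
  next
    assume ?R
    then obtain t r where U0: "0 \<le> U" and tr: "\<And>i. \<bar>x$i\<bar> \<le> t i \<and> 0 \<le> t i \<and> 0 \<le> r i \<and> t i^a \<le> r i^b * U^(a-b)"
      and sr: "sum r UNIV \<le> U" by blast
    show ?L
    proof (cases "U = 0")
      case True
      have "\<forall>i\<in>UNIV. r i = 0" using sr tr True
        by (subst sum_nonneg_eq_0_iff[symmetric]) (auto intro: antisym sum_nonneg)
      then have "t i^a \<le> 0" for i using tr[of i] ab by (simp add: zero_power)
      then have "t i = 0" for i using tr[of i] ab
        by (metis antisym not_one_le_zero zero_le_power power_eq_0_iff)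
      then have "x$i = 0" for i using tr[of i] by simp
      then show ?L using True by simp
    next
      case False
      then have Up: "0 < U" using U0 by simp
      have ti: "\<bar>x$i\<bar> powr P \<le> r i * U powr (P - 1)" for i
      proof -
        have "\<bar>x$i\<bar> powr P \<le> t i powr P" using tr[of i] Ppos by (intro powr_mono2) auto
        moreover have "t i powr P \<le> r i * U powr (P - 1)"
        proof -
          have "(t i powr P)^b = t i^a" using powr_pow_ab[of "t i" b a P] tr[of i] ab P by simp
          also have "\<dots> \<le> r i^b * U^(a-b)" using tr by blast
          also have "\<dots> = (r i * U powr (P - 1))^b"
            using powr_pow_ab2[OF Up ab P] by (simp add: power_mult_distrib)
          finally have "(t i powr P)^b \<le> (r i * U powr (P - 1))^b" .
          moreover have "0 \<le> r i * U powr (P - 1)" using tr[of i] by simp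
          moreover have "0 < b" using ab by simp
          ultimately show ?thesis using power_mono_iff[of "t i powr P" "r i * U powr (P - 1)" b] by simp
        qed
        ultimately show ?thesis by linarith
      qed
      have "S \<le> (\<Sum>i\<in>UNIV. r i * U powr (P - 1))" unfolding S_def by (intro sum_mono ti)
      also have "\<dots> = U powr (P - 1) * sum r UNIV" by (simp add: sum_distrib_right mult.commute)
      also have "\<dots> \<le> U powr (P - 1) * U" using sr by (intro mult_left_mono) auto
      also have "\<dots> = U powr P" using Up by (simp add: powr_diff)
      finally have "S \<le> U powr P" .
      then have "S powr (1/P) \<le> (U powr P) powr (1/P)" using S0 Ppos by (intro powr_mono2) auto
      also have "\<dots> = U" using Up Ppos by (simp add: powr_powr)
      finally show ?L by (simp add: S_def)
    qed
  qed
qed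


lemma farkas_affine:
  fixes a :: "'i \<Rightarrow> 'a::euclidean_space" and c :: "'i \<Rightarrow> real"
  assumes fin: "finite I"
    and y0: "\<forall>i\<in>I. a i \<bullet> y0 \<le> c i"
    and imp: "\<forall>y. (\<forall>i\<in>I. a i \<bullet> y \<le> c i) \<longrightarrow> M \<bullet> y \<le> t"
  shows "\<exists>l. (\<forall>i\<in>I. 0 \<le> l i) \<and> (\<Sum>i\<in>I. l i *\<^sub>R a i) = M \<and> (\<Sum>i\<in>I. l i * c i) \<le> t"
proof -
  define G where "G = insert (0::'a, 1::real) ((\<lambda>i. (a i, c i)) ` I)"
  define N where "N = {(\<Sum>i\<in>I. l i *\<^sub>R (a i, c i)) + m *\<^sub>R (0::'a, 1::real) | l m. (\<forall>i\<in>I. 0 \<le> l i) \<and> 0 \<le> m}"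
  define K where "K = convex_cone hull G"
  have finG: "finite G" unfolding G_def using fin by simp
  have Kc: "closed K" unfolding K_def by (rule closed_convex_cone_hull[OF finG])
  have Kcv: "convex K" unfolding K_def by (rule convex_convex_cone_hull)
  have Kcone: "convex_cone K" unfolding K_def by (rule convex_cone_convex_cone_hull)
  have GK: "G \<subseteq> K" unfolding K_def by (rule hull_subset)
  have NC: "convex_cone N" unfolding convex_cone_iff
  proof (intro conjI ballI allI impI)
    show "0 \<in> N" unfolding N_def by (rule CollectI, rule exI[of _ "\<lambda>_. 0"], rule exI[of _ 0]) (simp only: scaleR_zero_left sum.neutral_const add_0_right, simp)
  next
    fix x y assume "x \<in> N" "y \<in> N"
    then obtain l1 m1 l2 m2 where x: "x = (\<Sum>i\<in>I. l1 i *\<^sub>R (a i, c i)) + m1 *\<^sub>R (0, 1)" "\<forall>i\<in>I. 0 \<le> l1 i" "0 \<le> m1"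
      and y: "y = (\<Sum>i\<in>I. l2 i *\<^sub>R (a i, c i)) + m2 *\<^sub>R (0, 1)" "\<forall>i\<in>I. 0 \<le> l2 i" "0 \<le> m2"
      unfolding N_def by blast
    have "x + y = (\<Sum>i\<in>I. (l1 i + l2 i) *\<^sub>R (a i, c i)) + (m1 + m2) *\<^sub>R (0, 1)"
      unfolding x y by (simp only: scaleR_add_left sum.distrib add_ac)
    then show "x + y \<in> N" unfolding N_def using x y
      by (intro CollectI exI[of _ "\<lambda>i. l1 i + l2 i"] exI[of _ "m1 + m2"]) auto
  next
    fix x and s :: real assume "x \<in> N" "0 \<le> s"
    then obtain l1 m1 where x: "x = (\<Sum>i\<in>I. l1 i *\<^sub>R (a i, c i)) + m1 *\<^sub>R (0, 1)" "\<forall>i\<in>I. 0 \<le> l1 i" "0 \<le> m1"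
      unfolding N_def by blast
    have "s *\<^sub>R x = (\<Sum>i\<in>I. (s * l1 i) *\<^sub>R (a i, c i)) + (s * m1) *\<^sub>R (0, 1)"
      unfolding x by (simp add: scaleR_add_right scaleR_sum_right mult.assoc)
    then show "s *\<^sub>R x \<in> N" unfolding N_def using x \<open>0 \<le> s\<close>
      by (intro CollectI exI[of _ "\<lambda>i. s * l1 i"] exI[of _ "s * m1"]) auto
  qed
  have GN: "G \<subseteq> N"
  proof
    fix g assume "g \<in> G"
    then consider "g = (0, 1)" | j where "j \<in> I" "g = (a j, c j)" unfolding G_def by blast
    then show "g \<in> N"
    proof cases
      case 1 then show ?thesis unfolding N_def
        by (intro CollectI exI[of _ "\<lambda>_. 0"] exI[of _ 1]) (simp only: scaleR_zero_left sum.neutral_const add_0_left scaleR_one, simp)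
    next
      case 2
      have "(\<Sum>i\<in>I. (if i = j then 1 else 0) *\<^sub>R (a i, c i)) = (\<Sum>i\<in>I. if i = j then (a i, c i) else 0)"
        by (rule sum.cong) (auto simp: zero_prod_def)
      also have "\<dots> = (a j, c j)" using sum.delta[OF fin, of j "\<lambda>i. (a i, c i)"] 2 by simp
      finally have "(\<Sum>i\<in>I. (if i = j then 1 else 0) *\<^sub>R (a i, c i)) = (a j, c j)" .
      then show ?thesis unfolding N_def using 2
        by (intro CollectI exI[of _ "\<lambda>i. if i = j then 1 else 0"] exI[of _ 0]) auto
    qed
  qed
  have KN: "K \<subseteq> N" unfolding K_def by (rule hull_minimal[where S=convex_cone, OF GN NC])
  show ?thesis
  proof (cases "(M, t) \<in> K")
    case True
    then have "(M, t) \<in> N" using KN by blast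
    then obtain l m where lm: "(M, t) = (\<Sum>i\<in>I. l i *\<^sub>R (a i, c i)) + m *\<^sub>R (0, 1)" "\<forall>i\<in>I. 0 \<le> l i" "0 \<le> m"
      unfolding N_def by blast
    have "(\<Sum>i\<in>I. l i *\<^sub>R (a i, c i)) = ((\<Sum>i\<in>I. l i *\<^sub>R a i), (\<Sum>i\<in>I. l i * c i))"
      by (induction I rule: infinite_finite_induct) (auto simp: fin zero_prod_def)
    then have "M = (\<Sum>i\<in>I. l i *\<^sub>R a i)" "t = (\<Sum>i\<in>I. l i * c i) + m"
      using lm(1) by auto
    then show ?thesis using lm by (intro exI[of _ l]) auto
  next
    case False
    obtain w \<beta> where w: "w \<bullet> (M, t) < \<beta>" "\<forall>x\<in>K. w \<bullet> x > \<beta>"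
      using separating_hyperplane_closed_point[OF Kcv Kc False] by blast
    have "0 \<in> K" using Kcone convex_cone_contains_0 by blast
    then have b0: "\<beta> < 0" using w by force
    have wpos: "0 \<le> w \<bullet> x" if "x \<in> K" for x
    proof (rule ccontr)
      assume "\<not> 0 \<le> w \<bullet> x"
      then have neg: "w \<bullet> x < 0" by simp
      define s where "s = \<beta> / (w \<bullet> x)"
      have "0 \<le> s" unfolding s_def using neg b0 by (simp add: divide_nonpos_neg)
      then have "s *\<^sub>R x \<in> K" using Kcone that by (simp add: convex_cone_iff)
      then have "w \<bullet> (s *\<^sub>R x) > \<beta>" using w by blast
      moreover have "w \<bullet> (s *\<^sub>R x) = \<beta>" unfolding s_def using neg by simp
      ultimately show False by simp
    qed
    obtain wa ws where wdef: "w = (wa, ws)" by (cases w)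
    have ws0: "0 \<le> ws" using wpos[of "(0,1)"] GK unfolding G_def wdef by auto
    have wai: "0 \<le> wa \<bullet> a i + ws * c i" if "i \<in> I" for i
      using wpos[of "(a i, c i)"] GK that unfolding G_def wdef by auto
    have wM: "wa \<bullet> M + ws * t < 0" using w(1) b0 unfolding wdef by simp
    show ?thesis
    proof (cases "ws = 0")
      case False
      then have wsp: "0 < ws" using ws0 by simp
      define y where "y = (- 1 / ws) *\<^sub>R wa"
      have "\<forall>i\<in>I. a i \<bullet> y \<le> c i"
      proof
        fix i assume "i \<in> I"
        have "a i \<bullet> y = - (wa \<bullet> a i) / ws" unfolding y_def by (simp add: inner_commute)
        also have "\<dots> \<le> c i"
        proof -
          have "- c i * ws \<le> wa \<bullet> a i" using wai[OF \<open>i \<in> I\<close>] by (simp add: algebra_simps)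
          then have "- c i \<le> (wa \<bullet> a i) / ws" using wsp by (simp add: le_divide_eq)
          then show ?thesis by linarith
        qed
        finally show "a i \<bullet> y \<le> c i" .
      qed
      then have "M \<bullet> y \<le> t" using imp by blast
      moreover have "M \<bullet> y = - (wa \<bullet> M) / ws" unfolding y_def by (simp add: inner_commute)
      ultimately have "- (wa \<bullet> M / ws) \<le> t" by simp
      then have "- t \<le> wa \<bullet> M / ws" by linarith
      then have "- t * ws \<le> wa \<bullet> M" using wsp by (simp add: le_divide_eq)
      then have "- (wa \<bullet> M) \<le> t * ws" by linarith
      then show ?thesis using wM by (simp add: algebra_simps)
    next
      case True
      have wai0: "0 \<le> wa \<bullet> a i" if "i \<in> I" for i using wai[OF that] True by simp
      have wM0: "wa \<bullet> M < 0" using wM True by simp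
      define q where "q = - (wa \<bullet> M)"
      have qpos: "0 < q" unfolding q_def using wM0 by simp
      define s where "s = max 0 ((t - M \<bullet> y0 + 1) / q)"
      define y where "y = y0 - s *\<^sub>R wa"
      have s0: "0 \<le> s" unfolding s_def by simp
      have "\<forall>i\<in>I. a i \<bullet> y \<le> c i"
      proof
        fix i assume "i \<in> I"
        have "a i \<bullet> y = a i \<bullet> y0 - s * (wa \<bullet> a i)" unfolding y_def by (simp add: inner_diff_right inner_commute)
        also have "\<dots> \<le> a i \<bullet> y0" using s0 wai0[OF \<open>i \<in> I\<close>] by simp
        finally show "a i \<bullet> y \<le> c i" using y0 \<open>i \<in> I\<close> by fastforce
      qed
      then have le: "M \<bullet> y \<le> t" using imp by blast
      have eq: "M \<bullet> y = M \<bullet> y0 + s * q" unfolding y_def q_def by (simp add: inner_diff_right inner_commute)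
      have "(t - M \<bullet> y0 + 1) / q \<le> s" unfolding s_def by simp
      then have ge: "t - M \<bullet> y0 + 1 \<le> s * q" using qpos by (simp add: pos_divide_le_eq)
      show ?thesis using le eq ge by linarith
    qed
  qed
qed


lemma mult_sgn_self: "(y::real) * sgn y = \<bar>y\<bar>"
  by (cases rule: linorder_cases[of y 0]) auto

lemma inner_le_l1_linf: "(h::real^'n) \<bullet> v \<le> (\<Sum>l\<in>UNIV. \<bar>h$l\<bar>) * linf v"
proof -
  have "h \<bullet> v = (\<Sum>l\<in>UNIV. h$l * v$l)" by (simp add: inner_vec_def)
  also have "\<dots> \<le> (\<Sum>l\<in>UNIV. \<bar>h$l\<bar> * linf v)"
  proof (rule sum_mono)
    fix l
    have "h$l * v$l \<le> \<bar>h$l\<bar> * \<bar>v$l\<bar>" by (simp add: abs_mult[symmetric])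
    also have "\<dots> \<le> \<bar>h$l\<bar> * linf v" by (intro mult_left_mono abs_le_linf) auto
    finally show "h$l * v$l \<le> \<bar>h$l\<bar> * linf v" .
  qed
  also have "\<dots> = (\<Sum>l\<in>UNIV. \<bar>h$l\<bar>) * linf v" by (simp add: sum_distrib_right)
  finally show ?thesis .
qed

lemma F_char:
  fixes h :: "nat \<Rightarrow> real^'n"
  assumes hgamma: "\<gamma> > 0"
  shows "x \<in> robust_feasible (polyS r h b) UA (U0g (polyS r h b) \<gamma> p d) \<longleftrightarrow>
    (\<forall>i<r. h i \<bullet> x \<le> b i) \<and>
    (\<forall>i<r. \<forall>A\<in>UA. h i \<bullet> (A *v x) + \<gamma> * (\<Sum>l\<in>UNIV. \<bar>h i$l\<bar>) * pnorm p x ^ d \<le> b i)"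
proof -
  let ?S = "polyS r h b"
  have "x \<in> robust_feasible ?S UA (U0g ?S \<gamma> p d) \<longleftrightarrow>
     (\<forall>i<r. h i \<bullet> x \<le> b i) \<and> (\<forall>A g. A \<in> UA \<longrightarrow> g \<in> U0g ?S \<gamma> p d \<longrightarrow> (\<forall>i<r. h i \<bullet> (A *v x + g x) \<le> b i))"
    unfolding robust_feasible_def polyS_def by simp
  also have "\<dots> \<longleftrightarrow> (\<forall>i<r. h i \<bullet> x \<le> b i) \<and>
    (\<forall>i<r. \<forall>A\<in>UA. h i \<bullet> (A *v x) + \<gamma> * (\<Sum>l\<in>UNIV. \<bar>h i$l\<bar>) * pnorm p x ^ d \<le> b i)"
  proof (intro conj_cong refl iffI allI impI ballI)
    fix i A
    assume xS: "\<forall>i<r. h i \<bullet> x \<le> b i"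
      and H: "\<forall>A g. A \<in> UA \<longrightarrow> g \<in> U0g ?S \<gamma> p d \<longrightarrow> (\<forall>i<r. h i \<bullet> (A *v x + g x) \<le> b i)"
      and i: "i < r" and A: "A \<in> UA"
    define g where "g = (\<lambda>y::real^'n. \<chi> l. sgn (h i$l) * (\<gamma> * pnorm p y ^ d))"
    have gU: "g \<in> U0g ?S \<gamma> p d"
      unfolding U0g_def
    proof (clarsimp simp: linf_le_iff)
      fix y :: "real^'n" and l
      have c0: "0 \<le> \<gamma> * pnorm p y ^ d" using hgamma pnorm_nonneg[of p y] by simp
      have "\<bar>g y $ l\<bar> = \<bar>sgn (h i$l)\<bar> * \<bar>\<gamma> * pnorm p y ^ d\<bar>" unfolding g_def vec_lambda_beta by (rule abs_mult)
      also have "\<dots> = \<bar>sgn (h i$l)\<bar> * (\<gamma> * pnorm p y ^ d)" by (simp only: abs_of_nonneg[OF c0])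
      also have "\<dots> \<le> 1 * (\<gamma> * pnorm p y ^ d)" using c0 by (intro mult_right_mono) (auto simp: abs_sgn_eq)
      finally show "\<bar>g y $ l\<bar> \<le> \<gamma> * pnorm p y ^ d" by simp
    qed
    have "h i \<bullet> g x = (\<Sum>l\<in>UNIV. h i$l * (sgn (h i$l) * (\<gamma> * pnorm p x ^ d)))"
      unfolding g_def by (simp add: inner_vec_def)
    also have "\<dots> = (\<Sum>l\<in>UNIV. \<bar>h i$l\<bar>) * (\<gamma> * pnorm p x ^ d)"
      by (simp add: sum_distrib_right mult.assoc[symmetric] mult_sgn_self)
    finally have hg: "h i \<bullet> g x = \<gamma> * (\<Sum>l\<in>UNIV. \<bar>h i$l\<bar>) * pnorm p x ^ d" by simp
    have "h i \<bullet> (A *v x + g x) \<le> b i" using H A gU i by blast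
    then show "h i \<bullet> (A *v x) + \<gamma> * (\<Sum>l\<in>UNIV. \<bar>h i$l\<bar>) * pnorm p x ^ d \<le> b i"
      using hg by (simp add: inner_add_right)
  next
    fix A g i
    assume xS: "\<forall>i<r. h i \<bullet> x \<le> b i"
      and H: "\<forall>i<r. \<forall>A\<in>UA. h i \<bullet> (A *v x) + \<gamma> * (\<Sum>l\<in>UNIV. \<bar>h i$l\<bar>) * pnorm p x ^ d \<le> b i"
      and A: "A \<in> UA" and gU: "g \<in> U0g ?S \<gamma> p d" and i: "i < r"
    have "x \<in> ?S" using xS unfolding polyS_def by simp
    then have lg: "linf (g x) \<le> \<gamma> * pnorm p x ^ d" using gU unfolding U0g_def by blast
    have "h i \<bullet> g x \<le> (\<Sum>l\<in>UNIV. \<bar>h i$l\<bar>) * linf (g x)" by (rule inner_le_l1_linf)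
    also have "\<dots> \<le> (\<Sum>l\<in>UNIV. \<bar>h i$l\<bar>) * (\<gamma> * pnorm p x ^ d)"
      using lg by (intro mult_left_mono) (auto intro: sum_nonneg)
    finally have "h i \<bullet> g x \<le> \<gamma> * (\<Sum>l\<in>UNIV. \<bar>h i$l\<bar>) * pnorm p x ^ d" by (simp add: mult_ac)
    then show "h i \<bullet> (A *v x + g x) \<le> b i" using H A i by (fastforce simp: inner_add_right)
  qed
  finally show ?thesis .
qed

definition Emat :: "'n \<Rightarrow> real^'n \<Rightarrow> real^'n^'n" where
  "Emat l x = (\<chi> i j. if i = l then x$j else 0)"
definition Hmat :: "real^'n \<Rightarrow> real^'n \<Rightarrow> real^'n^'n" where
  "Hmat h x = (\<chi> i j. h$i * x$j)"

lemma inner_mat: "(M::real^'n^'n) \<bullet> A = (\<Sum>i\<in>UNIV. \<Sum>j\<in>UNIV. M$i$j * A$i$j)"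
  by (simp add: inner_vec_def)

lemma trace_tr: "trace (transpose V ** A) = V \<bullet> (A::real^'n^'n)"
proof -
  have "trace (transpose V ** A) = (\<Sum>i\<in>UNIV. \<Sum>k\<in>UNIV. V$k$i * A$k$i)"
    by (simp add: trace_def matrix_matrix_mult_def transpose_def)
  also have "\<dots> = (\<Sum>k\<in>UNIV. \<Sum>i\<in>UNIV. V$k$i * A$k$i)" by (rule sum.swap)
  finally show ?thesis by (simp add: inner_mat)
qed

lemma mv_Emat: "(A *v x) $ l = Emat l x \<bullet> A"
proof -
  have "Emat l x \<bullet> A = (\<Sum>i\<in>UNIV. \<Sum>j\<in>UNIV. (if i = l then x$j else 0) * A$i$j)"
    by (simp add: inner_mat Emat_def)
  also have "\<dots> = (\<Sum>i\<in>UNIV. if i = l then (\<Sum>j\<in>UNIV. x$j * A$i$j) else 0)"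
    by (rule sum.cong) auto
  also have "\<dots> = (\<Sum>j\<in>UNIV. x$j * A$l$j)" by simp
  finally show ?thesis by (simp add: matrix_vector_mult_def mult.commute)
qed

lemma h_Hmat: "h \<bullet> (A *v x) = Hmat h x \<bullet> A"
proof -
  have "h \<bullet> (A *v x) = (\<Sum>i\<in>UNIV. h$i * (\<Sum>j\<in>UNIV. A$i$j * x$j))"
    by (simp add: inner_vec_def matrix_vector_mult_def)
  also have "\<dots> = (\<Sum>i\<in>UNIV. \<Sum>j\<in>UNIV. h$i * x$j * A$i$j)"
    by (simp add: sum_distrib_left mult_ac)
  finally show ?thesis by (simp add: inner_mat Hmat_def)
qed

lemma dual_iff:
  fixes a :: "'i \<Rightarrow> 'a::euclidean_space"
  assumes fin: "finite I" and ne: "\<exists>y. \<forall>i\<in>I. a i \<bullet> y \<le> c i"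
  shows "(\<forall>y. (\<forall>i\<in>I. a i \<bullet> y \<le> c i) \<longrightarrow> M \<bullet> y \<le> t) \<longleftrightarrow>
    (\<exists>l. (\<forall>i\<in>I. 0 \<le> l i) \<and> (\<Sum>i\<in>I. l i *\<^sub>R a i) = M \<and> (\<Sum>i\<in>I. l i * c i) \<le> t)"
proof
  assume "\<forall>y. (\<forall>i\<in>I. a i \<bullet> y \<le> c i) \<longrightarrow> M \<bullet> y \<le> t"
  then show "\<exists>l. (\<forall>i\<in>I. 0 \<le> l i) \<and> (\<Sum>i\<in>I. l i *\<^sub>R a i) = M \<and> (\<Sum>i\<in>I. l i * c i) \<le> t"
    using farkas_affine[OF fin] ne by blast
next
  assume "\<exists>l. (\<forall>i\<in>I. 0 \<le> l i) \<and> (\<Sum>i\<in>I. l i *\<^sub>R a i) = M \<and> (\<Sum>i\<in>I. l i * c i) \<le> t"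
  then obtain l where l: "\<forall>i\<in>I. 0 \<le> l i" "(\<Sum>i\<in>I. l i *\<^sub>R a i) = M" "(\<Sum>i\<in>I. l i * c i) \<le> t" by blast
  show "\<forall>y. (\<forall>i\<in>I. a i \<bullet> y \<le> c i) \<longrightarrow> M \<bullet> y \<le> t"
  proof (intro allI impI)
    fix y assume y: "\<forall>i\<in>I. a i \<bullet> y \<le> c i"
    have "M \<bullet> y = (\<Sum>i\<in>I. l i * (a i \<bullet> y))" unfolding l(2)[symmetric] by (simp add: inner_sum_left)
    also have "\<dots> \<le> (\<Sum>i\<in>I. l i * c i)" using l y by (intro sum_mono mult_left_mono) auto
    finally show "M \<bullet> y \<le> t" using l by simp
  qed
qed


lemma GMpow:
  assumes "1 \<le> b" "b \<le> a" "0 \<le> R" "0 \<le> U" "0 \<le> T"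
  shows "GM a (\<lambda>j. if j < b then R else if j < a then U else T) T \<longleftrightarrow> T^a \<le> R^b * U^(a-b)"
proof -
  have a2: "a \<le> 2^a" using less_exp[of a] by linarith
  have "GM a (\<lambda>j. if j < b then R else if j < a then U else T) T \<longleftrightarrow>
        0 \<le> T \<and> T^(2^a) \<le> R^b * U^(a-b) * T^(2^a-a)"
    by (rule GM3[OF assms(2) a2 assms(3,4,5)])
  also have "\<dots> \<longleftrightarrow> T^a \<le> R^b * U^(a-b)"
    using pow_pad[of T "R^b * U^(a-b)" a "2^a"] assms a2 by simp
  finally show ?thesis .
qed

lemma GMpowd:
  assumes "1 \<le> d" "0 \<le> s" "0 \<le> U"
  shows "GM d (\<lambda>j. if j < 1 then s else if j < 1 + (2^d - d) then U else 1) U \<longleftrightarrow> U^d \<le> s"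
proof -
  have d2: "d \<le> 2^d" using less_exp[of d] by linarith
  have a2: "1 + (2^d - d) \<le> 2^d" using assms(1) d2 by linarith
  have "GM d (\<lambda>j. if j < 1 then s else if j < 1 + (2^d - d) then U else 1) U \<longleftrightarrow>
        0 \<le> U \<and> U^(2^d) \<le> s^1 * U^(1 + (2^d - d) - 1) * 1^(2^d - (1 + (2^d - d)))"
    by (rule GM3) (use assms a2 in auto)
  also have "\<dots> \<longleftrightarrow> U^(2^d) \<le> s * U^(2^d - d)" using assms by simp
  also have "\<dots> \<longleftrightarrow> U^d \<le> s" using pow_pad[of U s d "2^d"] assms d2 by simp
  finally show ?thesis .
qed

lemma rep_linf: "rep (\<lambda>(x::real^'n) w. linf x \<le> w 0)"
proof -
  have "rep (\<lambda>x w. \<forall>i\<in>(UNIV::'n set). x$i \<le> w 0 \<and> - x$i \<le> w 0)"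
  proof (rule rep_ball[OF finite_class.finite_UNIV])
    fix i :: 'n
    show "rep (\<lambda>x w. x$i \<le> w 0 \<and> - x$i \<le> w 0)"
      by (rule rep_and[OF rep_le[OF aff_comp aff_var] rep_le[OF aff_neg[OF aff_comp] aff_var]])
  qed
  then show ?thesis
    by (rule rep_cong) (simp add: linf_le_iff abs_le_iff)
qed

lemma inj_idx_exists: "\<exists>idx::'n::finite \<Rightarrow> nat. inj idx"
  using finite_imp_inj_to_nat_seg[of "UNIV::'n set"] by auto

lemma rep_pnrat:
  assumes ab: "1 \<le> nb" "nb \<le> na" and P: "P = real na / real nb"
  shows "rep (\<lambda>(x::real^'n) w. (\<Sum>i\<in>UNIV. \<bar>x$i\<bar> powr P) powr (1/P) \<le> w 0)"
proof -
  obtain idx :: "'n \<Rightarrow> nat" where inj: "inj idx" using inj_idx_exists by blast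
  define Q where "Q = (\<lambda>(x::real^'n) W. 0 \<le> ev W 0 \<and>
     (\<forall>i\<in>UNIV. (x$i \<le> od W (2 * idx i) \<and> - x$i \<le> od W (2 * idx i)) \<and>
        (0 \<le> od W (2 * idx i) \<and> 0 \<le> od W (2 * idx i + 1) \<and>
         GM na (\<lambda>j. if j < nb then od W (2 * idx i + 1) else if j < na then ev W 0 else od W (2 * idx i))
           (od W (2 * idx i)))) \<and>
     (\<Sum>i\<in>UNIV. od W (2 * idx i + 1)) \<le> ev W 0)"
  have r1: "rep (\<lambda>(x::real^'n) W. 0 \<le> ev W 0)" by (rule rep_lin[OF aff_ev])
  have r2: "rep (\<lambda>(x::real^'n) W. \<forall>i\<in>UNIV. (x$i \<le> od W (2 * idx i) \<and> - x$i \<le> od W (2 * idx i)) \<and>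
        (0 \<le> od W (2 * idx i) \<and> 0 \<le> od W (2 * idx i + 1) \<and>
         GM na (\<lambda>j. if j < nb then od W (2 * idx i + 1) else if j < na then ev W 0 else od W (2 * idx i))
           (od W (2 * idx i))))"
  proof (rule rep_ball[OF finite_class.finite_UNIV])
    fix i :: 'n
    show "rep (\<lambda>x W. (x$i \<le> od W (2 * idx i) \<and> - x$i \<le> od W (2 * idx i)) \<and>
        (0 \<le> od W (2 * idx i) \<and> 0 \<le> od W (2 * idx i + 1) \<and>
         GM na (\<lambda>j. if j < nb then od W (2 * idx i + 1) else if j < na then ev W 0 else od W (2 * idx i))
           (od W (2 * idx i))))"
      by (rule rep_and[OF rep_and[OF rep_le[OF aff_comp aff_od] rep_le[OF aff_neg[OF aff_comp] aff_od]]
            rep_and[OF rep_lin[OF aff_od] rep_and[OF rep_lin[OF aff_od] rep_GM3[OF aff_od aff_ev aff_od aff_od]]]])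
  qed
  have asum: "aff (\<lambda>(x::real^'n) W. \<Sum>i\<in>UNIV. od W (2 * idx i + 1))"
    by (rule aff_sum[OF finite_class.finite_UNIV aff_od])
  have r3: "rep (\<lambda>(x::real^'n) W. (\<Sum>i\<in>UNIV. od W (2 * idx i + 1)) \<le> ev W 0)"
    by (rule rep_le[OF asum aff_ev])
  have "rep Q" unfolding Q_def by (rule rep_and[OF r1 rep_and[OF r2 r3]])
  then have "rep (\<lambda>x w. \<exists>u. Q x (merge w u))" by (rule rep_ex)
  then show ?thesis
  proof (rule rep_cong)
    fix x :: "real^'n" and w
    have "(\<exists>u. Q x (merge w u)) \<longleftrightarrow>
      0 \<le> w 0 \<and> (\<exists>t r. (\<forall>i. \<bar>x$i\<bar> \<le> t i \<and> 0 \<le> t i \<and> 0 \<le> r i \<and> t i^na \<le> r i^nb * (w 0)^(na-nb)) \<and> sum r UNIV \<le> w 0)"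
    proof
      assume "\<exists>u. Q x (merge w u)"
      then obtain u where u: "Q x (merge w u)" by blast
      define t where "t = (\<lambda>i. u (2 * idx i))"
      define r where "r = (\<lambda>i. u (2 * idx i + 1))"
      have w0: "0 \<le> w 0" using u unfolding Q_def ev_merge by simp
      have "\<forall>i. \<bar>x$i\<bar> \<le> t i \<and> 0 \<le> t i \<and> 0 \<le> r i \<and> t i^na \<le> r i^nb * (w 0)^(na-nb)"
      proof
        fix i
        have h: "x$i \<le> t i" "- x$i \<le> t i" "0 \<le> t i" "0 \<le> r i"
          "GM na (\<lambda>j. if j < nb then r i else if j < na then w 0 else t i) (t i)"
          using u unfolding Q_def ev_merge od_merge t_def r_def by auto
        then show "\<bar>x$i\<bar> \<le> t i \<and> 0 \<le> t i \<and> 0 \<le> r i \<and> t i^na \<le> r i^nb * (w 0)^(na-nb)"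
          using GMpow[OF ab h(4) w0 h(3)] by auto
      qed
      moreover have "sum r UNIV \<le> w 0" using u unfolding Q_def ev_merge od_merge r_def by simp
      ultimately show "0 \<le> w 0 \<and> (\<exists>t r. (\<forall>i. \<bar>x$i\<bar> \<le> t i \<and> 0 \<le> t i \<and> 0 \<le> r i \<and> t i^na \<le> r i^nb * (w 0)^(na-nb)) \<and> sum r UNIV \<le> w 0)"
        using w0 by blast
    next
      assume "0 \<le> w 0 \<and> (\<exists>t r. (\<forall>i. \<bar>x$i\<bar> \<le> t i \<and> 0 \<le> t i \<and> 0 \<le> r i \<and> t i^na \<le> r i^nb * (w 0)^(na-nb)) \<and> sum r UNIV \<le> w 0)"
      then obtain t r where w0: "0 \<le> w 0" and tr: "\<forall>i. \<bar>x$i\<bar> \<le> t i \<and> 0 \<le> t i \<and> 0 \<le> r i \<and> t i^na \<le> r i^nb * (w 0)^(na-nb)"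
        and sr: "sum r UNIV \<le> w 0" by blast
      define u where "u = (\<lambda>n. if even n then t (inv idx (n div 2)) else r (inv idx (n div 2)))"
      have ut: "u (2 * idx i) = t i" for i unfolding u_def using inj by simp
      have ur: "u (2 * idx i + 1) = r i" for i unfolding u_def using inj by simp
      have "Q x (merge w u)" unfolding Q_def ev_merge od_merge ut ur
      proof (intro conjI ballI)
        show "0 \<le> w 0" by (rule w0)
        show "sum r UNIV \<le> w 0" by (rule sr)
        fix i :: 'n
        show "x$i \<le> t i" "- x$i \<le> t i" "0 \<le> t i" "0 \<le> r i" using tr by (auto simp: abs_le_iff)
        show "GM na (\<lambda>j. if j < nb then r i else if j < na then w 0 else t i) (t i)"
          using GMpow[OF ab _ w0, of "r i" "t i"] tr by auto
      qed
      then show "\<exists>u. Q x (merge w u)" by blast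
    qed
    also have "\<dots> \<longleftrightarrow> (\<Sum>i\<in>UNIV. \<bar>x$i\<bar> powr P) powr (1/P) \<le> w 0"
      by (rule pn_rat_iff[OF ab P, symmetric])
    finally show "(\<exists>u. Q x (merge w u)) \<longleftrightarrow> (\<Sum>i\<in>UNIV. \<bar>x$i\<bar> powr P) powr (1/P) \<le> w 0" .
  qed
qed

lemma rep_pn:
  assumes hp: "p = \<infinity> \<or> (\<exists>q\<in>\<rat>. p = ereal q \<and> q \<ge> 1)"
  shows "rep (\<lambda>(x::real^'n) w. pnorm p x \<le> w 0)"
proof (cases "p = \<infinity>")
  case True
  then show ?thesis using rep_linf by (simp add: pnorm_def)
next
  case False
  then obtain q where q: "q \<in> \<rat>" "p = ereal q" "q \<ge> 1" using hp by blast
  obtain a b :: int where ab: "b > 0" "q = of_int a / of_int b" using Rats_cases'[OF q(1)] by metis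
  have "real_of_int b \<le> real_of_int a" using ab q(3) by (simp add: le_divide_eq)
  then have ba: "b \<le> a" by simp
  define na where "na = nat a"
  define nb where "nb = nat b"
  have ab': "1 \<le> nb" "nb \<le> na" unfolding na_def nb_def using ab ba by auto
  have qn: "q = real na / real nb" unfolding na_def nb_def using ab ba by simp
  have "rep (\<lambda>(x::real^'n) w. (\<Sum>i\<in>UNIV. \<bar>x$i\<bar> powr q) powr (1/q) \<le> w 0)"
    by (rule rep_pnrat[OF ab' qn])
  then show ?thesis using q by (simp add: pnorm_def)
qed

lemma rep_pnd:
  assumes hp: "p = \<infinity> \<or> (\<exists>q\<in>\<rat>. p = ereal q \<and> q \<ge> 1)"
  shows "rep (\<lambda>(x::real^'n) w. pnorm p x ^ d \<le> w 0)"
proof (cases "d = 0")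
  case True
  have "rep (\<lambda>(x::real^'n) w. 1 \<le> w 0)" by (rule rep_le[OF aff_const aff_var])
  then show ?thesis using True by simp
next
  case False
  then have d1: "1 \<le> d" by simp
  define Q where "Q = (\<lambda>(x::real^'n) W. pnorm p x \<le> od W 0 \<and> 0 \<le> od W 0 \<and> 0 \<le> ev W 0 \<and>
      GM d (\<lambda>j. if j < 1 then ev W 0 else if j < 1 + (2^d - d) then od W 0 else 1) (od W 0))"
  have r1: "rep (\<lambda>(x::real^'n) W. pnorm p x \<le> od W 0)"
    using rep_subst[of "\<lambda>(x::real^'n) w. pnorm p x \<le> w 0" "\<lambda>k x W. od W k", OF rep_pn[OF hp] aff_od] by simp
  have "rep Q" unfolding Q_def
    by (rule rep_and[OF r1 rep_and[OF rep_lin[OF aff_od] rep_and[OF rep_lin[OF aff_ev]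
          rep_GM3[OF aff_ev aff_od aff_const aff_od]]]])
  then have "rep (\<lambda>x w. \<exists>u. Q x (merge w u))" by (rule rep_ex)
  then show ?thesis
  proof (rule rep_cong)
    fix x :: "real^'n" and w
    show "(\<exists>u. Q x (merge w u)) \<longleftrightarrow> pnorm p x ^ d \<le> w 0"
    proof
      assume "\<exists>u. Q x (merge w u)"
      then obtain u where u: "Q x (merge w u)" by blast
      then have h: "pnorm p x \<le> u 0" "0 \<le> u 0" "0 \<le> w 0"
        "GM d (\<lambda>j. if j < 1 then w 0 else if j < 1 + (2^d - d) then u 0 else 1) (u 0)"
        unfolding Q_def ev_merge od_merge by auto
      then have "u 0 ^ d \<le> w 0" using GMpowd[OF d1 h(3) h(2)] by simp
      moreover have "pnorm p x ^ d \<le> u 0 ^ d" using h(1) pnorm_nonneg by (intro power_mono) auto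
      ultimately show "pnorm p x ^ d \<le> w 0" by simp
    next
      assume le: "pnorm p x ^ d \<le> w 0"
      have pn0: "0 \<le> pnorm p x" by (rule pnorm_nonneg)
      then have w0: "0 \<le> w 0" using le by (meson order_trans zero_le_power)
      have "Q x (merge w (\<lambda>_. pnorm p x))" unfolding Q_def ev_merge od_merge
        using GMpowd[OF d1 w0 pn0] le pn0 w0 by simp
      then show "\<exists>u. Q x (merge w u)" by blast
    qed
  qed
qed


lemma mat_eq_Hmat:
  fixes a :: "'i \<Rightarrow> real^'n^'n"
  shows "(\<Sum>i\<in>I. l i *\<^sub>R a i) = Hmat hv x \<longleftrightarrow>
    (\<forall>rc\<in>(UNIV::('n\<times>'n) set). (\<Sum>i\<in>I. a i $ fst rc $ snd rc * l i) = hv $ fst rc * x $ snd rc)"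
  by (auto simp: vec_eq_iff Hmat_def mult.commute)

lemma rep_dual:
  fixes a :: "'i \<Rightarrow> real^'n^'n" and c :: "'i \<Rightarrow> real" and hv :: "real^'n" and idx :: "'i \<Rightarrow> nat"
  assumes fin: "finite I" and inj: "inj_on idx I"
  shows "rep (\<lambda>(x::real^'n) w. \<exists>l. (\<forall>i\<in>I. 0 \<le> l i) \<and> (\<Sum>i\<in>I. l i *\<^sub>R a i) = Hmat hv x \<and>
              (\<Sum>i\<in>I. l i * c i) \<le> bv - gv * w 0)"
proof -
  define Q where "Q = (\<lambda>(x::real^'n) W. (\<forall>i\<in>I. 0 \<le> od W (idx i)) \<and>
     ((\<forall>rc\<in>(UNIV::('n\<times>'n) set). (\<Sum>i\<in>I. a i $ fst rc $ snd rc * od W (idx i)) = hv $ fst rc * x $ snd rc) \<and>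
      (\<Sum>i\<in>I. c i * od W (idx i)) \<le> bv - gv * ev W 0))"
  have r1: "rep (\<lambda>(x::real^'n) W. \<forall>i\<in>I. 0 \<le> od W (idx i))"
  proof (rule rep_ball[OF fin])
    fix i show "rep (\<lambda>(x::real^'n) W. 0 \<le> od W (idx i))" by (rule rep_lin[OF aff_od])
  qed
  have r2: "rep (\<lambda>(x::real^'n) W. \<forall>rc\<in>(UNIV::('n\<times>'n) set). (\<Sum>i\<in>I. a i $ fst rc $ snd rc * od W (idx i)) = hv $ fst rc * x $ snd rc)"
  proof (rule rep_ball[OF finite_class.finite_UNIV])
    fix rc :: "'n \<times> 'n"
    show "rep (\<lambda>(x::real^'n) W. (\<Sum>i\<in>I. a i $ fst rc $ snd rc * od W (idx i)) = hv $ fst rc * x $ snd rc)"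
      apply (rule rep_eq)
       apply (rule aff_sum[OF fin])
       apply (rule aff_mult)
       apply (rule aff_od)
      apply (rule aff_mult)
      apply (rule aff_comp)
      done
  qed
  have r3: "rep (\<lambda>(x::real^'n) W. (\<Sum>i\<in>I. c i * od W (idx i)) \<le> bv - gv * ev W 0)"
    apply (rule rep_le)
     apply (rule aff_sum[OF fin])
     apply (rule aff_mult)
     apply (rule aff_od)
    apply (rule aff_diff)
     apply (rule aff_const)
    apply (rule aff_mult)
    apply (rule aff_ev)
    done
  have "rep Q" unfolding Q_def by (rule rep_and[OF r1 rep_and[OF r2 r3]])
  then have "rep (\<lambda>x w. \<exists>u. Q x (merge w u))" by (rule rep_ex)
  then show ?thesis
  proof (rule rep_cong)
    fix x :: "real^'n" and w
    show "(\<exists>u. Q x (merge w u)) \<longleftrightarrow> (\<exists>l. (\<forall>i\<in>I. 0 \<le> l i) \<and> (\<Sum>i\<in>I. l i *\<^sub>R a i) = Hmat hv x \<and>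
              (\<Sum>i\<in>I. l i * c i) \<le> bv - gv * w 0)"
    proof
      assume "\<exists>u. Q x (merge w u)"
      then obtain u where u: "Q x (merge w u)" by blast
      define l where "l = (\<lambda>i. u (idx i))"
      have "(\<forall>i\<in>I. 0 \<le> l i) \<and> (\<Sum>i\<in>I. l i *\<^sub>R a i) = Hmat hv x \<and> (\<Sum>i\<in>I. l i * c i) \<le> bv - gv * w 0"
        using u unfolding Q_def ev_merge od_merge mat_eq_Hmat l_def by (simp add: mult.commute)
      then show "\<exists>l. (\<forall>i\<in>I. 0 \<le> l i) \<and> (\<Sum>i\<in>I. l i *\<^sub>R a i) = Hmat hv x \<and>
              (\<Sum>i\<in>I. l i * c i) \<le> bv - gv * w 0" by blast
    next
      assume "\<exists>l. (\<forall>i\<in>I. 0 \<le> l i) \<and> (\<Sum>i\<in>I. l i *\<^sub>R a i) = Hmat hv x \<and>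
              (\<Sum>i\<in>I. l i * c i) \<le> bv - gv * w 0"
      then obtain l where l: "\<forall>i\<in>I. 0 \<le> l i" "(\<Sum>i\<in>I. l i *\<^sub>R a i) = Hmat hv x"
        "(\<Sum>i\<in>I. l i * c i) \<le> bv - gv * w 0" by blast
      define u where "u = (\<lambda>n. l (inv_into I idx n))"
      have ul: "u (idx i) = l i" if "i \<in> I" for i unfolding u_def using inv_into_f_f[OF inj that] by simp
      have s1: "(\<Sum>i\<in>I. a i $ r $ q * u (idx i)) = (\<Sum>i\<in>I. a i $ r $ q * l i)" for r q
        by (rule sum.cong) (auto simp: ul)
      have s2: "(\<Sum>i\<in>I. c i * u (idx i)) = (\<Sum>i\<in>I. l i * c i)"
        by (rule sum.cong) (auto simp: ul mult.commute)
      have "Q x (merge w u)" unfolding Q_def ev_merge od_merge s1 s2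
        using l by (auto simp: ul mat_eq_Hmat)
      then show "\<exists>u. Q x (merge w u)" by blast
    qed
  qed
qed


lemma rep_socp:
  fixes P :: "real^'n \<Rightarrow> (nat \<Rightarrow> real) \<Rightarrow> bool"
  assumes rP: "rep P" and F: "\<forall>x. x \<in> F \<longleftrightarrow> P x w0"
  shows "socp_reformulable c F"
proof -
  obtain Cs where Cs: "\<forall>C\<in>set Cs. socp C" "\<forall>x w. P x w \<longleftrightarrow> (\<exists>z. \<forall>C\<in>set Cs. C x (merge w z))"
    using rP unfolding rep_def by blast
  define L where "L = length Cs"
  define C' where "C' = (\<lambda>l (x::real^'n) z. (Cs!l) x (merge w0 z))"
  have sC: "socp (C' l)" if "l < L" for l
  proof -
    have "socp (Cs!l)" using Cs(1) that unfolding L_def by simp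
    then have "socp (\<lambda>x V. (Cs!l) x (merge (\<lambda>k. w0 k) (\<lambda>k. V k)))"
      by (rule socp_merge) (rule aff_const, rule aff_var)
    then show ?thesis unfolding C'_def by simp
  qed
  have Fx: "x \<in> F \<longleftrightarrow> (\<exists>z. \<forall>l<L. C' l x z)" for x
  proof -
    have "(\<forall>C\<in>set Cs. C x (merge w0 z)) \<longleftrightarrow> (\<forall>l<L. C' l x z)" for z
      unfolding C'_def L_def by (rule all_set_conv_all_nth)
    then show ?thesis using F[rule_format, of x] Cs(2)[rule_format, of x w0] by simp
  qed
  have "\<forall>l. \<exists>q::nat. l < L \<longrightarrow> (\<exists>A \<beta>. (\<forall>i<q. aff (A i)) \<and> aff \<beta> \<and>
      (\<forall>x z. C' l x z \<longleftrightarrow> sqrt (\<Sum>i<q. (A i x z)\<^sup>2) \<le> \<beta> x z))"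
    using sC unfolding socp_def by blast
  then obtain Q :: "nat \<Rightarrow> nat" where "\<forall>l. l < L \<longrightarrow> (\<exists>A \<beta>. (\<forall>i<Q l. aff (A i)) \<and> aff \<beta> \<and>
      (\<forall>x z. C' l x z \<longleftrightarrow> sqrt (\<Sum>i<Q l. (A i x z)\<^sup>2) \<le> \<beta> x z))"
    by (metis choice)
  then have "\<forall>l. \<exists>A. l < L \<longrightarrow> (\<exists>\<beta>. (\<forall>i<Q l. aff (A i)) \<and> aff \<beta> \<and>
      (\<forall>x z. C' l x z \<longleftrightarrow> sqrt (\<Sum>i<Q l. (A i x z)\<^sup>2) \<le> \<beta> x z))"
    by blast
  then obtain AA where "\<forall>l. l < L \<longrightarrow> (\<exists>\<beta>. (\<forall>i<Q l. aff (AA l i)) \<and> aff \<beta> \<and>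
      (\<forall>x z. C' l x z \<longleftrightarrow> sqrt (\<Sum>i<Q l. (AA l i x z)\<^sup>2) \<le> \<beta> x z))"
    by (metis choice)
  then have "\<forall>l. \<exists>\<beta>. l < L \<longrightarrow> ((\<forall>i<Q l. aff (AA l i)) \<and> aff \<beta> \<and>
      (\<forall>x z. C' l x z \<longleftrightarrow> sqrt (\<Sum>i<Q l. (AA l i x z)\<^sup>2) \<le> \<beta> x z))"
    by blast
  then obtain BB where D: "\<And>l. l < L \<Longrightarrow> (\<forall>i<Q l. aff (AA l i)) \<and> aff (BB l) \<and>
      (\<forall>x z. C' l x z \<longleftrightarrow> sqrt (\<Sum>i<Q l. (AA l i x z)\<^sup>2) \<le> BB l x z)"
    by (metis choice)
  have "\<forall>p. \<exists>m0. (fst p < L \<and> snd p < Q (fst p)) \<longrightarrow>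
     (\<forall>M\<ge>m0. \<exists>ex ez f. \<forall>x z. AA (fst p) (snd p) x z = ex \<bullet> x + (\<Sum>j<M. ez j * z j) + f)"
  proof
    fix p :: "nat \<times> nat"
    show "\<exists>m0. (fst p < L \<and> snd p < Q (fst p)) \<longrightarrow>
     (\<forall>M\<ge>m0. \<exists>ex ez f. \<forall>x z. AA (fst p) (snd p) x z = ex \<bullet> x + (\<Sum>j<M. ez j * z j) + f)"
    proof (cases "fst p < L \<and> snd p < Q (fst p)")
      case True
      then have "aff (AA (fst p) (snd p))" using D by blast
      from aff_pad[OF this] show ?thesis by blast
    qed blast
  qed
  then obtain mA where mA0: "\<forall>p. (fst p < L \<and> snd p < Q (fst p)) \<longrightarrow>
     (\<forall>M\<ge>mA p. \<exists>ex ez f. \<forall>x z. AA (fst p) (snd p) x z = ex \<bullet> x + (\<Sum>j<M. ez j * z j) + f)"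
    by metis
  have mA: "\<forall>M\<ge>mA (l, i). \<exists>ex ez f. \<forall>x z. AA l i x z = ex \<bullet> x + (\<Sum>j<M. ez j * z j) + f"
    if "l < L" "i < Q l" for l i
    using spec[OF mA0, of "(l, i)"] that by simp
  have "\<forall>l. \<exists>m0. l < L \<longrightarrow>
     (\<forall>M\<ge>m0. \<exists>ex ez f. \<forall>x z. BB l x z = ex \<bullet> x + (\<Sum>j<M. ez j * z j) + f)"
  proof
    fix l
    show "\<exists>m0. l < L \<longrightarrow>
     (\<forall>M\<ge>m0. \<exists>ex ez f. \<forall>x z. BB l x z = ex \<bullet> x + (\<Sum>j<M. ez j * z j) + f)"
    proof (cases "l < L")
      case True
      then have "aff (BB l)" using D by blast
      from aff_pad[OF this] show ?thesis by blast
    qed blast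
  qed
  then obtain mB where mB: "\<And>l. l < L \<Longrightarrow>
     (\<forall>M\<ge>mB l. \<exists>ex ez f. \<forall>x z. BB l x z = ex \<bullet> x + (\<Sum>j<M. ez j * z j) + f)"
    by (metis choice)
  define M where "M = (\<Sum>l<L. mB l + (\<Sum>i<Q l. mA (l, i)))"
  have MA: "mA (l, i) \<le> M" if "l < L" "i < Q l" for l i
  proof -
    have "mA (l, i) \<le> (\<Sum>i<Q l. mA (l, i))" using that by (intro member_le_sum) auto
    also have "\<dots> \<le> mB l + (\<Sum>i<Q l. mA (l, i))" by simp
    also have "\<dots> \<le> M" unfolding M_def using that(1)
      by (intro member_le_sum[of l "{..<L}" "\<lambda>l. mB l + (\<Sum>i<Q l. mA (l, i))"]) auto
    finally show ?thesis .
  qed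
  have MB: "mB l \<le> M" if "l < L" for l
  proof -
    have "mB l \<le> mB l + (\<Sum>i<Q l. mA (l, i))" by simp
    also have "\<dots> \<le> M" unfolding M_def using that
      by (intro member_le_sum[of l "{..<L}" "\<lambda>l. mB l + (\<Sum>i<Q l. mA (l, i))"]) auto
    finally show ?thesis .
  qed
  have "\<forall>p. \<exists>ex. (fst p < L \<and> snd p < Q (fst p)) \<longrightarrow>
     (\<exists>ez f. \<forall>x z. AA (fst p) (snd p) x z = ex \<bullet> x + (\<Sum>j<M. ez j * z j) + f)"
  proof
    fix p :: "nat \<times> nat"
    show "\<exists>ex. (fst p < L \<and> snd p < Q (fst p)) \<longrightarrow>
     (\<exists>ez f. \<forall>x z. AA (fst p) (snd p) x z = ex \<bullet> x + (\<Sum>j<M. ez j * z j) + f)"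
    proof (cases "fst p < L \<and> snd p < Q (fst p)")
      case True
      then have "mA (fst p, snd p) \<le> M" using MA by blast
      then show ?thesis using mA[of "fst p" "snd p"] True by blast
    qed blast
  qed
  then obtain EXA where "\<forall>p. (fst p < L \<and> snd p < Q (fst p)) \<longrightarrow>
     (\<exists>ez f. \<forall>x z. AA (fst p) (snd p) x z = EXA p \<bullet> x + (\<Sum>j<M. ez j * z j) + f)"
    by (metis choice)
  then have "\<forall>p. \<exists>ez. (fst p < L \<and> snd p < Q (fst p)) \<longrightarrow>
     (\<exists>f. \<forall>x z. AA (fst p) (snd p) x z = EXA p \<bullet> x + (\<Sum>j<M. ez j * z j) + f)"
    by blast
  then obtain EZA where "\<forall>p. (fst p < L \<and> snd p < Q (fst p)) \<longrightarrow>
     (\<exists>f. \<forall>x z. AA (fst p) (snd p) x z = EXA p \<bullet> x + (\<Sum>j<M. EZA p j * z j) + f)"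
    by (metis choice)
  then have "\<forall>p. \<exists>f. (fst p < L \<and> snd p < Q (fst p)) \<longrightarrow>
     (\<forall>x z. AA (fst p) (snd p) x z = EXA p \<bullet> x + (\<Sum>j<M. EZA p j * z j) + f)"
    by blast
  then obtain FA where RA: "\<And>p. fst p < L \<Longrightarrow> snd p < Q (fst p) \<Longrightarrow>
     (\<forall>x z. AA (fst p) (snd p) x z = EXA p \<bullet> x + (\<Sum>j<M. EZA p j * z j) + FA p)"
    by (metis choice)
  have "\<forall>l. \<exists>ex. l < L \<longrightarrow>
     (\<exists>ez f. \<forall>x z. BB l x z = ex \<bullet> x + (\<Sum>j<M. ez j * z j) + f)"
  proof
    fix l
    show "\<exists>ex. l < L \<longrightarrow> (\<exists>ez f. \<forall>x z. BB l x z = ex \<bullet> x + (\<Sum>j<M. ez j * z j) + f)"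
    proof (cases "l < L")
      case True
      then show ?thesis using mB[OF True] MB[OF True] by blast
    qed blast
  qed
  then obtain EXB where "\<forall>l. l < L \<longrightarrow>
     (\<exists>ez f. \<forall>x z. BB l x z = EXB l \<bullet> x + (\<Sum>j<M. ez j * z j) + f)"
    by (metis choice)
  then have "\<forall>l. \<exists>ez. l < L \<longrightarrow>
     (\<exists>f. \<forall>x z. BB l x z = EXB l \<bullet> x + (\<Sum>j<M. ez j * z j) + f)"
    by blast
  then obtain EZB where "\<forall>l. l < L \<longrightarrow>
     (\<exists>f. \<forall>x z. BB l x z = EXB l \<bullet> x + (\<Sum>j<M. EZB l j * z j) + f)"
    by (metis choice)
  then have "\<forall>l. \<exists>f. l < L \<longrightarrow>
     (\<forall>x z. BB l x z = EXB l \<bullet> x + (\<Sum>j<M. EZB l j * z j) + f)"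
    by blast
  then obtain FB where RB: "\<And>l. l < L \<Longrightarrow>
     (\<forall>x z. BB l x z = EXB l \<bullet> x + (\<Sum>j<M. EZB l j * z j) + FB l)"
    by (metis choice)
  have key: "soc_constraint M (Q l) (\<lambda>i. EXA (l, i)) (\<lambda>i. EZA (l, i)) (\<lambda>i. FA (l, i)) (EXB l) (EZB l) (FB l) x z
      \<longleftrightarrow> C' l x z" if "l < L" for l x z
  proof -
    have "(\<Sum>i<Q l. (EXA (l, i) \<bullet> x + (\<Sum>j<M. EZA (l, i) j * z j) + FA (l, i))\<^sup>2) = (\<Sum>i<Q l. (AA l i x z)\<^sup>2)"
    proof (rule sum.cong)
      fix i assume "i \<in> {..<Q l}"
      then show "(EXA (l, i) \<bullet> x + (\<Sum>j<M. EZA (l, i) j * z j) + FA (l, i))\<^sup>2 = (AA l i x z)\<^sup>2"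
        using RA[of "(l, i)"] that by simp
    qed simp
    then show ?thesis unfolding soc_constraint_def using D[OF that] RB[OF that] by simp
  qed
  show ?thesis unfolding socp_reformulable_def
  proof (rule exI[of _ M], rule exI[of _ L], rule exI[of _ Q], rule exI[of _ "\<lambda>l i. EXA (l, i)"], rule exI[of _ "\<lambda>l i. EZA (l, i)"],
      rule exI[of _ "\<lambda>l i. FA (l, i)"], rule exI[of _ EXB], rule exI[of _ EZB], rule exI[of _ FB], rule exI[of _ c],
      rule exI[of _ "\<lambda>_. 0"], intro conjI allI impI)
    fix x
    show "x \<in> F \<longleftrightarrow> (\<exists>z. \<forall>l<L. soc_constraint M (Q l) (\<lambda>i. EXA (l, i)) (\<lambda>i. EZA (l, i)) (\<lambda>i. FA (l, i)) (EXB l) (EZB l) (FB l) x z)"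
      using Fx key by simp
  next
    fix x z
    show "c \<bullet> x + (\<Sum>j<M. 0 * z j) = c \<bullet> x" by simp
  qed
qed


theorem theorem24:
  fixes r s k d :: nat
    and h :: "nat \<Rightarrow> real^'n" and b :: "nat \<Rightarrow> real"
    and V :: "nat \<Rightarrow> real^'n^'n" and v :: "nat \<Rightarrow> real"
    and p :: ereal and \<gamma> :: real
    and Astar :: "real^'n^'n" and gstar :: "real^'n \<Rightarrow> real^'n"
    and xs ys :: "nat \<Rightarrow> real^'n" and c :: "real^'n"
  assumes hp: "p = \<infinity> \<or> (\<exists>q\<in>\<rat>. p = ereal q \<and> q \<ge> 1)"
    and hgamma: "\<gamma> > 0"
    and hA: "Astar \<in> U0A s V v"
    and hg: "gstar \<in> U0g (polyS r h b) \<gamma> p d"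
    and hy: "\<forall>j<k. ys j = Astar *v xs j + gstar (xs j)"
  shows "socp_reformulable c
           (robust_feasible (polyS r h b)
              (UkA (U0A s V v) \<gamma> p d k xs ys)
              (U0g (polyS r h b) \<gamma> p d))"
proof -
  define UA where "UA = UkA (U0A s V v) \<gamma> p d k xs ys"
  define F where "F = robust_feasible (polyS r h b) UA (U0g (polyS r h b) \<gamma> p d)"
  define nh where "nh = (\<lambda>i. \<Sum>l\<in>UNIV. \<bar>h i$l\<bar>)"
  have Fc: "x \<in> F \<longleftrightarrow> (\<forall>i<r. h i \<bullet> x \<le> b i) \<and>
    (\<forall>i<r. \<forall>A\<in>UA. h i \<bullet> (A *v x) + \<gamma> * nh i * pnorm p x ^ d \<le> b i)" for x
    unfolding F_def nh_def by (rule F_char[OF hgamma])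
  have rS: "rep (\<lambda>(x::real^'n) w. \<forall>i\<in>{..<r}. h i \<bullet> x \<le> b i)"
  proof (rule rep_ball[OF finite_lessThan])
    fix i show "rep (\<lambda>(x::real^'n) w. h i \<bullet> x \<le> b i)" by (rule rep_le[OF aff_inner aff_const])
  qed
  have "socp_reformulable c F"
  proof (cases "UA = {}")
    case True
    have "x \<in> F \<longleftrightarrow> (\<lambda>(x::real^'n) w. \<forall>i\<in>{..<r}. h i \<bullet> x \<le> b i) x (\<lambda>_. 0)" for x
      using Fc[of x] True by auto
    then show ?thesis using rep_socp[OF rS] by blast
  next
    case False
    define \<beta> where "\<beta> = (\<lambda>j. \<gamma> * pnorm p (xs j) ^ d)"
    define I :: "(nat + nat \<times> 'n \<times> bool) set" where "I = Inl ` {..<s} \<union> Inr ` ({..<k} \<times> UNIV)"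
    define aI where "aI = (\<lambda>\<iota>. case \<iota> of Inl j \<Rightarrow> V j
        | Inr (j, l, \<sigma>) \<Rightarrow> if \<sigma> then Emat l (xs j) else - Emat l (xs j))"
    define cI where "cI = (\<lambda>\<iota>. case \<iota> of Inl j \<Rightarrow> v j
        | Inr (j, l, \<sigma>) \<Rightarrow> if \<sigma> then \<beta> j + ys j $ l else \<beta> j - ys j $ l)"
    have finI: "finite I" unfolding I_def by simp
    have UA_iff: "A \<in> UA \<longleftrightarrow> (\<forall>\<iota>\<in>I. aI \<iota> \<bullet> A \<le> cI \<iota>)" for A
    proof -
      have "A \<in> UA \<longleftrightarrow> (\<forall>j<s. V j \<bullet> A \<le> v j) \<and>
         (\<forall>j<k. \<forall>l. Emat l (xs j) \<bullet> A - ys j $ l \<le> \<beta> j \<and> - (Emat l (xs j) \<bullet> A - ys j $ l) \<le> \<beta> j)"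
        unfolding UA_def UkA_def U0A_def \<beta>_def by (simp add: trace_tr linf_le_iff mv_Emat abs_le_iff)
      also have "\<dots> \<longleftrightarrow> (\<forall>\<iota>\<in>I. aI \<iota> \<bullet> A \<le> cI \<iota>)"
      proof
        assume H: "\<forall>\<iota>\<in>I. aI \<iota> \<bullet> A \<le> cI \<iota>"
        have "V j \<bullet> A \<le> v j" if "j < s" for j
          using H[rule_format, of "Inl j"] that unfolding I_def aI_def cI_def by auto
        moreover have "Emat l (xs j) \<bullet> A - ys j $ l \<le> \<beta> j \<and> - (Emat l (xs j) \<bullet> A - ys j $ l) \<le> \<beta> j"
          if "j < k" for j l
          using H[rule_format, of "Inr (j, l, True)"] H[rule_format, of "Inr (j, l, False)"] that
          unfolding I_def aI_def cI_def by (auto simp: inner_minus_left)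
        ultimately show "(\<forall>j<s. V j \<bullet> A \<le> v j) \<and>
         (\<forall>j<k. \<forall>l. Emat l (xs j) \<bullet> A - ys j $ l \<le> \<beta> j \<and> - (Emat l (xs j) \<bullet> A - ys j $ l) \<le> \<beta> j)" by blast
      next
        assume "(\<forall>j<s. V j \<bullet> A \<le> v j) \<and>
         (\<forall>j<k. \<forall>l. Emat l (xs j) \<bullet> A - ys j $ l \<le> \<beta> j \<and> - (Emat l (xs j) \<bullet> A - ys j $ l) \<le> \<beta> j)"
        then show "\<forall>\<iota>\<in>I. aI \<iota> \<bullet> A \<le> cI \<iota>"
          unfolding I_def aI_def cI_def by (auto simp: inner_minus_left algebra_simps)
      qed
      finally show ?thesis .
    qed
    obtain A0 where "A0 \<in> UA" using False by blast
    then have ne: "\<exists>y. \<forall>\<iota>\<in>I. aI \<iota> \<bullet> y \<le> cI \<iota>" using UA_iff by blast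
    obtain idx :: "nat + nat \<times> 'n \<times> bool \<Rightarrow> nat" where inj: "inj_on idx I"
      using finite_imp_inj_to_nat_seg[OF finI] by blast
    define D where "D = (\<lambda>i (x::real^'n) (w::nat \<Rightarrow> real). \<exists>l. (\<forall>\<iota>\<in>I. 0 \<le> l \<iota>) \<and>
         (\<Sum>\<iota>\<in>I. l \<iota> *\<^sub>R aI \<iota>) = Hmat (h i) x \<and> (\<Sum>\<iota>\<in>I. l \<iota> * cI \<iota>) \<le> b i - (\<gamma> * nh i) * w 0)"
    have rD: "rep (D i)" for i unfolding D_def by (rule rep_dual[OF finI inj])
    have Dkey: "D i x w \<longleftrightarrow> (\<forall>A\<in>UA. Hmat (h i) x \<bullet> A \<le> b i - (\<gamma> * nh i) * w 0)" for i x w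
    proof -
      have "D i x w \<longleftrightarrow> (\<forall>y. (\<forall>\<iota>\<in>I. aI \<iota> \<bullet> y \<le> cI \<iota>) \<longrightarrow> Hmat (h i) x \<bullet> y \<le> b i - (\<gamma> * nh i) * w 0)"
        unfolding D_def by (rule dual_iff[OF finI ne, symmetric])
      also have "\<dots> \<longleftrightarrow> (\<forall>A\<in>UA. Hmat (h i) x \<bullet> A \<le> b i - (\<gamma> * nh i) * w 0)"
        using UA_iff by blast
      finally show ?thesis .
    qed
    define Q where "Q = (\<lambda>(x::real^'n) W. pnorm p x ^ d \<le> od W 0 \<and> (\<forall>i\<in>{..<r}. h i \<bullet> x \<le> b i) \<and>
        (\<forall>i\<in>{..<r}. D i x (od W)))"
    have r1: "rep (\<lambda>(x::real^'n) W. pnorm p x ^ d \<le> od W 0)"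
      using rep_subst[of "\<lambda>(x::real^'n) w. pnorm p x ^ d \<le> w 0" "\<lambda>k x W. od W k", OF rep_pnd[OF hp] aff_od] by simp
    have r3: "rep (\<lambda>(x::real^'n) W. \<forall>i\<in>{..<r}. D i x (od W))"
    proof (rule rep_ball[OF finite_lessThan])
      fix i
      show "rep (\<lambda>(x::real^'n) W. D i x (od W))"
        using rep_subst[of "D i" "\<lambda>k x W. od W k", OF rD aff_od] by simp
    qed
    have "rep Q" unfolding Q_def by (rule rep_and[OF r1 rep_and[OF rS r3]])
    then have rP: "rep (\<lambda>x w. \<exists>u. Q x (merge w u))" by (rule rep_ex)
    have nh0: "0 \<le> \<gamma> * nh i" for i unfolding nh_def using hgamma by (intro mult_nonneg_nonneg sum_nonneg) auto
    have "x \<in> F \<longleftrightarrow> (\<lambda>x w. \<exists>u. Q x (merge w u)) x (\<lambda>_. 0)" for x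
    proof -
      have "(\<lambda>x w. \<exists>u. Q x (merge w u)) x (\<lambda>_. 0) \<longleftrightarrow>
        (\<exists>u::nat\<Rightarrow>real. pnorm p x ^ d \<le> u 0 \<and> (\<forall>i<r. h i \<bullet> x \<le> b i) \<and>
          (\<forall>i<r. \<forall>A\<in>UA. Hmat (h i) x \<bullet> A \<le> b i - (\<gamma> * nh i) * u 0))"
        unfolding Q_def Dkey by (simp add: lessThan_def)
      also have "\<dots> \<longleftrightarrow> x \<in> F"
      proof
        assume "\<exists>u::nat\<Rightarrow>real. pnorm p x ^ d \<le> u 0 \<and> (\<forall>i<r. h i \<bullet> x \<le> b i) \<and>
          (\<forall>i<r. \<forall>A\<in>UA. Hmat (h i) x \<bullet> A \<le> b i - (\<gamma> * nh i) * u 0)"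
        then obtain u :: "nat \<Rightarrow> real" where u: "pnorm p x ^ d \<le> u 0" "\<forall>i<r. h i \<bullet> x \<le> b i"
          "\<forall>i<r. \<forall>A\<in>UA. Hmat (h i) x \<bullet> A \<le> b i - (\<gamma> * nh i) * u 0" by blast
        have "\<forall>i<r. \<forall>A\<in>UA. h i \<bullet> (A *v x) + \<gamma> * nh i * pnorm p x ^ d \<le> b i"
        proof (intro allI impI ballI)
          fix i A assume i: "i < r" and A: "A \<in> UA"
          have "(\<gamma> * nh i) * pnorm p x ^ d \<le> (\<gamma> * nh i) * u 0" using u(1) nh0[of i] by (rule mult_left_mono)
          moreover have "Hmat (h i) x \<bullet> A \<le> b i - \<gamma> * nh i * u 0" using u(3) i A by blast
          ultimately show "h i \<bullet> (A *v x) + \<gamma> * nh i * pnorm p x ^ d \<le> b i"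
            unfolding h_Hmat by linarith
        qed
        then show "x \<in> F" using Fc u(2) by blast
      next
        assume "x \<in> F"
        then have f: "\<forall>i<r. h i \<bullet> x \<le> b i" "\<forall>i<r. \<forall>A\<in>UA. h i \<bullet> (A *v x) + \<gamma> * nh i * pnorm p x ^ d \<le> b i"
          using Fc by blast+
        have "\<forall>i<r. \<forall>A\<in>UA. Hmat (h i) x \<bullet> A \<le> b i - (\<gamma> * nh i) * pnorm p x ^ d"
          using f(2) by (auto simp: h_Hmat[symmetric] algebra_simps)
        then show "\<exists>u::nat\<Rightarrow>real. pnorm p x ^ d \<le> u 0 \<and> (\<forall>i<r. h i \<bullet> x \<le> b i) \<and>
          (\<forall>i<r. \<forall>A\<in>UA. Hmat (h i) x \<bullet> A \<le> b i - (\<gamma> * nh i) * u 0)"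
          using f(1) by (intro exI[of _ "\<lambda>_. pnorm p x ^ d"]) simp
      qed
      finally show ?thesis by simp
    qed
    then show ?thesis using rep_socp[OF rP] by blast
  qed
  then show ?thesis unfolding F_def UA_def .
qed


end
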